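(* Let $A$ be a $2n\times 2n$ real symmetric positive definite matrix with $AJ = JA$, and fix $\xi\in\{c,w,h\}$. Then every $2n\times 2n$ real symmetric positive definite matrix $B$ with $d(B) = \Delta_\xi(A)^\uparrow$ lies in the convex hull of the symplectic orbit of $A$, i.e. $B = \sum_{j=1}^k p_j M_j^TAM_j$ for some $M_1,\dots,M_k\in\operatorname{Sp}(2n)$ and some probability vector $(p_1,\dots,p_k)$. In particular, $\operatorname{diag}(\Delta_\xi(A))\oplus\operatorname{diag}(\Delta_\xi(A))$ lies in the convex hull of the symplectic orbit of $A$.
   Context: Let $J = \begin{bmatrix} 0 & I_n \\ -I_n & 0\end{bmatrix}$; $\operatorname{Sp}(2n)$ is the group of real $2n\times 2n$ matrices $M$ with $M^TJM=J$. For a real symmetric positive definite $2n\times 2n$ matrix $A$, Williamson's theorem gives $M\in\operatorname{Sp}(2n)$ with $M^TAM = D\oplus D$, $D$ a positive diagonal $n\times n$ matrix unique up to permutation; its diagonal entries are the symplectic eigenvalues of $A$ and $d(A)$ denotes the vector of them in non-decreasing order. For $x\in\mathbb{R}^n$, $x^\uparrow$ is $x$ rearranged in non-decreasing order. Write $A = \begin{bmatrix} A_{11} & A_{12}\\ A_{12}^T & A_{22}\end{bmatrix}$ with $n\times n$ blocks, and let $\Delta_{11},\Delta_{12},\Delta_{22}\in\mathbb{R}^n$ be the vectors of diagonal entries of $A_{11},A_{12},A_{22}$. With all operations entrywise, define $\Delta_c(A) = \frac{\Delta_{11}+\Delta_{22}}{2}$, $\Delta_h(A) = \sqrt{\frac{\Delta_{11}^2+\Delta_{22}^2}{2}}$,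 $\Delta_w(A) = \sqrt{\frac{\Delta_{11}^2+\Delta_{22}^2+2\Delta_{12}^2}{2}}$. For a vector $v$, $\operatorname{diag}(v)$ is the diagonal matrix with diagonal $v$. *)

theory Defs
  imports "Jordan_Normal_Form.Matrix"
begin

definition Jmat :: "nat \<Rightarrow> real mat" where
  "Jmat n = four_block_mat (0\<^sub>m n n) (1\<^sub>m n) (- 1\<^sub>m n) (0\<^sub>m n n)"

definition symplectic :: "nat \<Rightarrow> real mat \<Rightarrow> bool" where
  "symplectic n M \<longleftrightarrow> M \<in> carrier_mat (2*n) (2*n) \<and> transpose_mat M * Jmat n * M = Jmat n"

definition pos_def :: "nat \<Rightarrow> real mat \<Rightarrow> bool" where
  "pos_def m A \<longleftrightarrow> A \<in> carrier_mat m m \<and> transpose_mat A = A \<and>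
     (\<forall>x \<in> carrier_vec m. x \<noteq> 0\<^sub>v m \<longrightarrow> x \<bullet> (A *\<^sub>v x) > 0)"

definition diagm :: "real list \<Rightarrow> real mat" where
  "diagm v = mat_diag (length v) (\<lambda>i. v ! i)"

definition dsum :: "real mat \<Rightarrow> real mat \<Rightarrow> real mat" where
  "dsum D E = four_block_mat D (0\<^sub>m (dim_row D) (dim_col E)) (0\<^sub>m (dim_row E) (dim_col D)) E"

text \<open>Symplectic eigenvalues in non-decreasing order (Williamson's theorem: the
  list exists and is unique for positive definite A).\<close>
definition sympl_eigs :: "nat \<Rightarrow> real mat \<Rightarrow> real list" where
  "sympl_eigs n A = (SOME ds. length ds = n \<and> sorted ds \<and> (\<forall>i<n. ds ! i > 0) \<and>
      (\<exists>M. symplectic n M \<and> transpose_mat M * A * M = dsum (diagm ds) (diagm ds)))"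

datatype mean_kind = Mc | Mw | Mh

definition D11 :: "nat \<Rightarrow> real mat \<Rightarrow> nat \<Rightarrow> real" where "D11 n A i = A $$ (i, i)"
definition D12 :: "nat \<Rightarrow> real mat \<Rightarrow> nat \<Rightarrow> real" where "D12 n A i = A $$ (i, n + i)"
definition D22 :: "nat \<Rightarrow> real mat \<Rightarrow> nat \<Rightarrow> real" where "D22 n A i = A $$ (n + i, n + i)"

definition Delta :: "mean_kind \<Rightarrow> nat \<Rightarrow> real mat \<Rightarrow> real list" where
  "Delta \<xi> n A = map (\<lambda>i. case \<xi> of
       Mc \<Rightarrow> (D11 n A i + D22 n A i) / 2
     | Mh \<Rightarrow> sqrt (((D11 n A i)\<^sup>2 + (D22 n A i)\<^sup>2) / 2)
     | Mw \<Rightarrow> sqrt (((D11 n A i)\<^sup>2 + (D22 n A i)\<^sup>2 + 2 * (D12 n A i)\<^sup>2) / 2)) [0..<n]"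

definition in_conv_sympl_orbit :: "nat \<Rightarrow> real mat \<Rightarrow> real mat \<Rightarrow> bool" where
  "in_conv_sympl_orbit n A B \<longleftrightarrow>
     (\<exists>k (p :: nat \<Rightarrow> real) (M :: nat \<Rightarrow> real mat).
        (\<forall>j<k. p j \<ge> 0) \<and> (\<Sum>j<k. p j) = 1 \<and> (\<forall>j<k. symplectic n (M j)) \<and>
        B = mat (2*n) (2*n) (\<lambda>(r,c). \<Sum>j<k. p j * (transpose_mat (M j) * A * M j) $$ (r, c)))"

end

theory Submission
  imports Defs "Jordan_Normal_Form.Spectral_Radius" "HOL-Combinatorics.Permutations"
begin

lemma mult_entry:
  assumes "A \<in> carrier_mat a b" "B \<in> carrier_mat b c" "i < a" "j < c"
  shows "(A * B) $$ (i,j) = (\<Sum>l<b. A $$ (i,l) * B $$ (l,j))"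
  using assms by (auto simp: scalar_prod_def atLeast0LessThan intro!: sum.cong)

lemma triple_entry:
  fixes P X Q :: "real mat"
  assumes "P \<in> carrier_mat N N" "X \<in> carrier_mat N N" "Q \<in> carrier_mat N N" "r < N" "c < N"
  shows "(transpose_mat P * X * Q) $$ (r,c) = (\<Sum>a<N. \<Sum>b<N. P $$ (a,r) * X $$ (a,b) * Q $$ (b,c))"
proof -
  have "(transpose_mat P * X * Q) $$ (r,c) = (\<Sum>b<N. (transpose_mat P * X) $$ (r,b) * Q $$ (b,c))"
    using assms by (intro mult_entry) auto
  also have "\<dots> = (\<Sum>b<N. (\<Sum>a<N. P $$ (a,r) * X $$ (a,b)) * Q $$ (b,c))"
    using assms by (intro sum.cong refl, subst mult_entry[of _ N N _ N]) auto
  also have "\<dots> = (\<Sum>b<N. \<Sum>a<N. P $$ (a,r) * X $$ (a,b) * Q $$ (b,c))"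
    by (simp add: sum_distrib_right)
  also have "\<dots> = (\<Sum>a<N. \<Sum>b<N. P $$ (a,r) * X $$ (a,b) * Q $$ (b,c))"
    by (rule sum.swap)
  finally show ?thesis .
qed

lemma GT:
  fixes X :: "real mat"
  fixes cc :: "nat \<Rightarrow> real"
  assumes X: "X \<in> carrier_mat N N" and g: "\<And>j. j < N \<Longrightarrow> g j < N"
  defines "T \<equiv> mat N N (\<lambda>(i,j). if i = g j then cc j else 0)"
  shows "transpose_mat T * X * T = mat N N (\<lambda>(i,j). cc i * cc j * X $$ (g i, g j))"
proof (rule eq_matI)
  fix i j assume i: "i < dim_row (mat N N (\<lambda>(i,j). cc i * cc j * X $$ (g i, g j)))"
    and j: "j < dim_col (mat N N (\<lambda>(i,j). cc i * cc j * X $$ (g i, g j)))"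
  have T: "T \<in> carrier_mat N N" unfolding T_def by auto
  from i j have i: "i < N" and j: "j < N" by auto
  have "(transpose_mat T * X * T) $$ (i,j) = (\<Sum>a<N. \<Sum>b<N. T $$ (a,i) * X $$ (a,b) * T $$ (b,j))"
    by (rule triple_entry[OF T X T i j])
  also have "\<dots> = (\<Sum>a<N. \<Sum>b<N. (if a = g i then (if b = g j then cc i * X $$ (a,b) * cc j else 0) else 0))"
    using i j by (intro sum.cong refl) (auto simp: T_def)
  also have "\<dots> = (\<Sum>a<N. (if a = g i then cc i * X $$ (a, g j) * cc j else 0))"
    using g[OF j] by (intro sum.cong refl) (simp add: sum.delta)
  also have "\<dots> = cc i * cc j * X $$ (g i, g j)"
    using g[OF i] by (simp add: sum.delta)
  finally show "(transpose_mat T * X * T) $$ (i,j) = mat N N (\<lambda>(i,j). cc i * cc j * X $$ (g i, g j)) $$ (i, j)"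
    using i j by simp
qed (auto simp: T_def)

lemma Jmat_carrier[simp]: "Jmat n \<in> carrier_mat (2*n) (2*n)"
  unfolding Jmat_def by (auto simp: mult_2)

lemma Jmat_dims[simp]: "dim_row (Jmat n) = 2*n" "dim_col (Jmat n) = 2*n"
  by (simp_all add: Jmat_def mult_2)

lemma Jmat_entry:
  assumes "r < 2*n" "c < 2*n"
  shows "Jmat n $$ (r,c) = (if r < n \<and> c = r + n then 1 else if n \<le> r \<and> r = c + n then -1 else 0)"
  using assms unfolding Jmat_def by (auto simp: mult_2)

lemma dsum_carrier[simp]: "dsum (diagm L) (diagm L) \<in> carrier_mat (2 * length L) (2 * length L)"
  unfolding dsum_def diagm_def by (auto simp: mult_2)

lemma dsum_entry:
  assumes "length L = n" "r < 2*n" "c < 2*n"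
  shows "dsum (diagm L) (diagm L) $$ (r,c) = (if r = c then L ! (r mod n) else 0)"
  using assms unfolding dsum_def diagm_def mat_diag_def
  by (auto simp: mult_2 le_mod_geq)

lemma cong_mult:
  fixes P Q A :: "real mat"
  assumes "P \<in> carrier_mat N N" "Q \<in> carrier_mat N N" "A \<in> carrier_mat N N"
  shows "transpose_mat (P * Q) * A * (P * Q) = transpose_mat Q * (transpose_mat P * A * P) * Q"
  using assms by (simp add: transpose_mult assoc_mult_mat[of _ N N _ N _ N])

lemma sympl_mult:
  assumes "symplectic n M" "symplectic n N"
  shows "symplectic n (M * N)"
  using assms unfolding symplectic_def
  by (auto simp: cong_mult[of M "2*n" N "Jmat n"])

lemma sum_split_add: fixes k k' :: nat shows "(\<Sum>j<k+k'. f j) = (\<Sum>j<k. f j) + (\<Sum>j<k'. f (k + j))"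
  by (induct k') (auto simp: add.assoc)

lemma conv_E:
  assumes "in_conv_sympl_orbit n A C"
  obtains k :: nat and p M where "\<forall>j<k. p j \<ge> 0" "(\<Sum>j<k. p j) = 1" "\<forall>j<k. symplectic n (M j)"
    "C = mat (2*n) (2*n) (\<lambda>(r,c). \<Sum>j<k. p j * (transpose_mat (M j) * A * M j) $$ (r, c))"
  using assms unfolding in_conv_sympl_orbit_def by blast


lemma conv_transport:
  assumes C: "in_conv_sympl_orbit n A C" and N: "symplectic n N" and A: "A \<in> carrier_mat (2*n) (2*n)"
  shows "in_conv_sympl_orbit n A (transpose_mat N * C * N)"
proof -
  obtain k :: nat and p M where p0: "\<forall>j<k. p j \<ge> 0" and p1: "(\<Sum>j<k. p j) = 1" and M: "\<forall>j<k. symplectic n (M j)"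
    and Ceq: "C = mat (2*n) (2*n) (\<lambda>(r,c). \<Sum>j<k. p j * (transpose_mat (M j) * A * M j) $$ (r, c))"
    by (rule conv_E[OF C])
  let ?N = "2*n"
  have Nc: "N \<in> carrier_mat ?N ?N" using N unfolding symplectic_def by auto
  have Mc: "\<And>j. j < k \<Longrightarrow> M j \<in> carrier_mat ?N ?N" using M unfolding symplectic_def by auto
  have Cc: "C \<in> carrier_mat ?N ?N" unfolding Ceq by auto
  show ?thesis unfolding in_conv_sympl_orbit_def
  proof (intro exI[of _ k] exI[of _ p] exI[of _ "\<lambda>j. M j * N"] conjI allI impI)
    show "\<And>j. j < k \<Longrightarrow> 0 \<le> p j" using p0 by auto
    show "(\<Sum>j<k. p j) = 1" by fact
    show "\<And>j. j < k \<Longrightarrow> symplectic n (M j * N)" using M N sympl_mult by auto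
    show "transpose_mat N * C * N = mat (2*n) (2*n) (\<lambda>(r,c). \<Sum>j<k. p j * (transpose_mat (M j * N) * A * (M j * N)) $$ (r, c))"
    proof (rule eq_matI)
      fix r c assume r: "r < dim_row (mat (2*n) (2*n) (\<lambda>(r,c). \<Sum>j<k. p j * (transpose_mat (M j * N) * A * (M j * N)) $$ (r, c)))"
        and c: "c < dim_col (mat (2*n) (2*n) (\<lambda>(r,c). \<Sum>j<k. p j * (transpose_mat (M j * N) * A * (M j * N)) $$ (r, c)))"
      from r c have r: "r < ?N" and c: "c < ?N" by auto
      have "(transpose_mat N * C * N) $$ (r,c) = (\<Sum>a<?N. \<Sum>b<?N. N $$ (a,r) * C $$ (a,b) * N $$ (b,c))"
        by (rule triple_entry[OF Nc Cc Nc r c])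
      also have "\<dots> = (\<Sum>a<?N. \<Sum>b<?N. \<Sum>j<k. p j * (N $$ (a,r) * (transpose_mat (M j) * A * M j) $$ (a,b) * N $$ (b,c)))"
      proof (intro sum.cong refl)
        fix a b assume a: "a \<in> {..<?N}" and b: "b \<in> {..<?N}"
        have Cab: "C $$ (a,b) = (\<Sum>j<k. p j * (transpose_mat (M j) * A * M j) $$ (a, b))"
          using a b unfolding Ceq by simp
        have "N $$ (a,r) * C $$ (a,b) * N $$ (b,c) = (\<Sum>j<k. N $$ (a,r) * (p j * (transpose_mat (M j) * A * M j) $$ (a, b)) * N $$ (b,c))"
          unfolding Cab by (simp add: sum_distrib_left sum_distrib_right)
        also have "\<dots> = (\<Sum>j<k. p j * (N $$ (a,r) * (transpose_mat (M j) * A * M j) $$ (a,b) * N $$ (b,c)))"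
          by (intro sum.cong refl) (simp add: mult_ac)
        finally show "N $$ (a,r) * C $$ (a,b) * N $$ (b,c) = (\<Sum>j<k. p j * (N $$ (a,r) * (transpose_mat (M j) * A * M j) $$ (a,b) * N $$ (b,c)))" .
      qed
      also have "\<dots> = (\<Sum>a<?N. \<Sum>j<k. \<Sum>b<?N. p j * (N $$ (a,r) * (transpose_mat (M j) * A * M j) $$ (a,b) * N $$ (b,c)))"
        by (rule sum.cong[OF refl], rule sum.swap)
      also have "\<dots> = (\<Sum>j<k. \<Sum>a<?N. \<Sum>b<?N. p j * (N $$ (a,r) * (transpose_mat (M j) * A * M j) $$ (a,b) * N $$ (b,c)))"
        by (rule sum.swap)
      also have "\<dots> = (\<Sum>j<k. p j * (\<Sum>a<?N. \<Sum>b<?N. N $$ (a,r) * (transpose_mat (M j) * A * M j) $$ (a,b) * N $$ (b,c)))"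
        by (simp add: sum_distrib_left)
      also have "\<dots> = (\<Sum>j<k. p j * (transpose_mat (M j * N) * A * (M j * N)) $$ (r, c))"
      proof (intro sum.cong refl)
        fix j assume j: "j \<in> {..<k}"
        have X: "transpose_mat (M j) * A * M j \<in> carrier_mat ?N ?N" using Mc[of j] j A by auto
        show "p j * (\<Sum>a<?N. \<Sum>b<?N. N $$ (a,r) * (transpose_mat (M j) * A * M j) $$ (a,b) * N $$ (b,c))
          = p j * (transpose_mat (M j * N) * A * (M j * N)) $$ (r, c)"
        proof -
          have "(transpose_mat (M j * N) * A * (M j * N)) $$ (r, c) = (\<Sum>a<?N. \<Sum>b<?N. N $$ (a,r) * (transpose_mat (M j) * A * M j) $$ (a,b) * N $$ (b,c))"
            using j unfolding cong_mult[OF Mc[of j] Nc A, OF _] by (simp add: triple_entry[OF Nc X Nc r c] cong_mult[OF Mc[of j] Nc A])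
          then show ?thesis by simp
        qed
      qed
      finally show "(transpose_mat N * C * N) $$ (r,c) = mat (2*n) (2*n) (\<lambda>(r,c). \<Sum>j<k. p j * (transpose_mat (M j * N) * A * (M j * N)) $$ (r, c)) $$ (r,c)"
        using r c by simp
    qed (use Nc Cc in auto)
  qed
qed
lemma conv_avg:
  assumes C: "in_conv_sympl_orbit n A C" and C': "in_conv_sympl_orbit n A C'"
  shows "in_conv_sympl_orbit n A (mat (2*n) (2*n) (\<lambda>(r,c). (C $$ (r,c) + C' $$ (r,c)) / 2))"
proof -
  obtain k :: nat and p M where p0: "\<forall>j<k. p j \<ge> 0" and p1: "(\<Sum>j<k. p j) = 1" and M: "\<forall>j<k. symplectic n (M j)"
    and Ceq: "C = mat (2*n) (2*n) (\<lambda>(r,c). \<Sum>j<k. p j * (transpose_mat (M j) * A * M j) $$ (r, c))"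
    by (rule conv_E[OF C])
  obtain k' :: nat and p' M' where p0': "\<forall>j<k'. p' j \<ge> 0" and p1': "(\<Sum>j<k'. p' j) = 1" and M': "\<forall>j<k'. symplectic n (M' j)"
    and Ceq': "C' = mat (2*n) (2*n) (\<lambda>(r,c). \<Sum>j<k'. p' j * (transpose_mat (M' j) * A * M' j) $$ (r, c))"
    by (rule conv_E[OF C'])
  define q where "q j = (if j < k then p j / 2 else p' (j - k) / 2)" for j
  define Q where "Q j = (if j < k then M j else M' (j - k))" for j
  show ?thesis unfolding in_conv_sympl_orbit_def
  proof (intro exI[of _ "k+k'"] exI[of _ q] exI[of _ Q] conjI allI impI)
    show "\<And>j. j < k + k' \<Longrightarrow> 0 \<le> q j" using p0 p0' by (auto simp: q_def)
    show "(\<Sum>j<k+k'. q j) = 1" using p1 p1' by (simp add: sum_split_add q_def sum_divide_distrib[symmetric])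
    show "\<And>j. j < k + k' \<Longrightarrow> symplectic n (Q j)" using M M' by (auto simp: Q_def)
    show "mat (2*n) (2*n) (\<lambda>(r,c). (C $$ (r,c) + C' $$ (r,c)) / 2) = mat (2*n) (2*n) (\<lambda>(r,c). \<Sum>j<k+k'. q j * (transpose_mat (Q j) * A * Q j) $$ (r, c))"
    proof (rule eq_matI)
      fix r c
      assume "r < dim_row (mat (2*n) (2*n) (\<lambda>(r,c). \<Sum>j<k+k'. q j * (transpose_mat (Q j) * A * Q j) $$ (r, c)))"
        "c < dim_col (mat (2*n) (2*n) (\<lambda>(r,c). \<Sum>j<k+k'. q j * (transpose_mat (Q j) * A * Q j) $$ (r, c)))"
      then have r: "r < 2*n" and c: "c < 2*n" by auto
      have e1: "(\<Sum>j<k+k'. q j * (transpose_mat (Q j) * A * Q j) $$ (r, c))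
        = (\<Sum>j<k. p j / 2 * (transpose_mat (M j) * A * M j) $$ (r, c))
        + (\<Sum>j<k'. p' j / 2 * (transpose_mat (M' j) * A * M' j) $$ (r, c))"
        unfolding sum_split_add by (simp add: q_def Q_def)
      have e2: "(\<Sum>j<k. p j / 2 * (transpose_mat (M j) * A * M j) $$ (r, c))
        = (\<Sum>j<k. p j * (transpose_mat (M j) * A * M j) $$ (r, c)) / 2"
        by (simp add: sum_divide_distrib)
      have e3: "(\<Sum>j<k'. p' j / 2 * (transpose_mat (M' j) * A * M' j) $$ (r, c))
        = (\<Sum>j<k'. p' j * (transpose_mat (M' j) * A * M' j) $$ (r, c)) / 2"
        by (simp add: sum_divide_distrib)
      show "mat (2*n) (2*n) (\<lambda>(r,c). (C $$ (r,c) + C' $$ (r,c)) / 2) $$ (r,c) = mat (2*n) (2*n) (\<lambda>(r,c). \<Sum>j<k+k'. q j * (transpose_mat (Q j) * A * Q j) $$ (r, c)) $$ (r,c)"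
        using r c by (simp only: index_mat split) (simp add: e1 Ceq Ceq' sum_divide_distrib[symmetric])
    qed auto
  qed
qed

lemma sum1: "(\<Sum>j<(1::nat). f j) = f 0" by simp

lemma conv_refl:
  assumes A: "A \<in> carrier_mat (2*n) (2*n)"
  shows "in_conv_sympl_orbit n A A"
  unfolding in_conv_sympl_orbit_def
proof (intro exI[of _ "Suc 0"] exI[of _ "\<lambda>_. 1"] exI[of _ "\<lambda>_. 1\<^sub>m (2*n)"] conjI allI impI)
  show "\<And>j. j < Suc 0 \<Longrightarrow> symplectic n (1\<^sub>m (2 * n))" unfolding symplectic_def by auto
  show "A = mat (2*n) (2*n) (\<lambda>(r,c). \<Sum>j<Suc 0. 1 * (transpose_mat (1\<^sub>m (2*n)) * A * 1\<^sub>m (2*n)) $$ (r, c))"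
    using A by (intro eq_matI) auto
qed auto



lemma quad_form:
  fixes A :: "real mat"
  assumes A: "A \<in> carrier_mat N N" and x: "x \<in> carrier_vec N"
  shows "x \<bullet> (A *\<^sub>v x) = (\<Sum>i<N. \<Sum>j<N. x $ i * A $$ (i,j) * x $ j)"
proof -
  have "x \<bullet> (A *\<^sub>v x) = (\<Sum>i<N. x $ i * (A *\<^sub>v x) $ i)"
    using A x by (simp add: scalar_prod_def atLeast0LessThan)
  also have "\<dots> = (\<Sum>i<N. x $ i * (\<Sum>j<N. A $$ (i,j) * x $ j))"
    using A x by (intro sum.cong refl) (simp add: scalar_prod_def atLeast0LessThan)
  also have "\<dots> = (\<Sum>i<N. \<Sum>j<N. x $ i * A $$ (i,j) * x $ j)"
    by (simp add: sum_distrib_left mult.assoc)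
  finally show ?thesis .
qed

lemma sum_delta2:
  assumes "finite S" "finite T" "i \<in> S" "j \<in> T"
  shows "(\<Sum>a\<in>S. \<Sum>b\<in>T. if a = i then (if b = j then f a b else 0) else 0) = f i j"
proof -
  have "\<And>a. (\<Sum>b\<in>T. if a = i then (if b = j then f a b else 0) else 0) = (if a = i then f a j else 0)"
    using assms by (simp add: sum.delta)
  then show ?thesis using assms by (simp add: sum.delta)
qed

lemma pos_def_diag:
  assumes "pos_def N A" "i < N"
  shows "A $$ (i,i) > 0"
proof -
  have A: "A \<in> carrier_mat N N" using assms unfolding pos_def_def by auto
  have "unit_vec N i \<bullet> (A *\<^sub>v unit_vec N i) > 0"
    using assms unfolding pos_def_def by auto
  also have "unit_vec N i \<bullet> (A *\<^sub>v unit_vec N i) = (\<Sum>a<N. \<Sum>b<N. (if a = i then (if b = i then A $$ (a,b) else 0) else 0))"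
    using assms by (auto simp: quad_form[OF A] intro!: sum.cong)
  also have "\<dots> = A $$ (i,i)" using assms by (intro sum_delta2) auto
  finally show ?thesis .
qed

lemma mult_J_entry:
  fixes X :: "real mat"
  assumes X: "X \<in> carrier_mat (2*n) (2*n)" and r: "r < 2*n" and c: "c < 2*n"
  shows "(X * Jmat n) $$ (r,c) = (if c < n then - X $$ (r, c+n) else X $$ (r, c-n))"
proof -
  have "(X * Jmat n) $$ (r,c) = (\<Sum>k<2*n. X $$ (r,k) * Jmat n $$ (k,c))"
    using X r c by (intro mult_entry) auto
  also have "\<dots> = (\<Sum>k<2*n. if k = (if c < n then c + n else c - n) then (if c < n then - X $$ (r,k) else X $$ (r,k)) else 0)"
    using c by (intro sum.cong refl) (auto simp: Jmat_entry)
  also have "\<dots> = (if c < n then - X $$ (r, c+n) else X $$ (r, c-n))"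
    using c by (simp add: sum.delta; arith)
  finally show ?thesis .
qed

lemma J_mult_entry:
  fixes X :: "real mat"
  assumes X: "X \<in> carrier_mat (2*n) (2*n)" and r: "r < 2*n" and c: "c < 2*n"
  shows "(Jmat n * X) $$ (r,c) = (if r < n then X $$ (r+n, c) else - X $$ (r-n, c))"
proof -
  have "(Jmat n * X) $$ (r,c) = (\<Sum>k<2*n. Jmat n $$ (r,k) * X $$ (k,c))"
    using X r c by (intro mult_entry) auto
  also have "\<dots> = (\<Sum>k<2*n. if k = (if r < n then r + n else r - n) then (if r < n then X $$ (k,c) else - X $$ (k,c)) else 0)"
    using r by (intro sum.cong refl) (auto simp: Jmat_entry)
  also have "\<dots> = (if r < n then X $$ (r+n, c) else - X $$ (r-n, c))"
    using r by (simp add: sum.delta; arith)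
  finally show ?thesis .
qed

lemma comm_struct:
  fixes A :: "real mat"
  assumes A: "A \<in> carrier_mat (2*n) (2*n)" and sym: "transpose_mat A = A"
    and comm: "A * Jmat n = Jmat n * A" and i: "i < n"
  shows "A $$ (n+i, n+i) = A $$ (i,i)" "A $$ (i, n+i) = 0" "A $$ (n+i, i) = 0"
proof -
  have "(A * Jmat n) $$ (i, n+i) = (Jmat n * A) $$ (i, n+i)" using comm by simp
  then show "A $$ (n+i, n+i) = A $$ (i,i)"
    using i by (simp add: mult_J_entry[OF A] J_mult_entry[OF A] add.commute)
  have s: "A $$ (n+i, i) = A $$ (i, n+i)"
    using arg_cong[OF sym, of "\<lambda>M. M $$ (i, n+i)"] A i by auto
  have "(A * Jmat n) $$ (i, i) = (Jmat n * A) $$ (i, i)" using comm by simp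
  then have "- A $$ (i, i+n) = A $$ (i+n, i)"
    using i by (simp add: mult_J_entry[OF A] J_mult_entry[OF A])
  then show "A $$ (i, n+i) = 0" "A $$ (n+i, i) = 0" using s by (simp_all add: add.commute)
qed

definition sgnm :: "nat \<Rightarrow> nat \<Rightarrow> real mat" where
  "sgnm n i = mat (2*n) (2*n) (\<lambda>(r,c). if r = id c then (if c mod n = i then -1 else 1) else 0)"

lemma sgnm_sympl: "symplectic n (sgnm n i)"
proof -
  have "transpose_mat (sgnm n i) * Jmat n * sgnm n i =
     mat (2*n) (2*n) (\<lambda>(r,c). (if r mod n = i then -1 else 1) * (if c mod n = i then -1 else 1) * Jmat n $$ (id r, id c))"
    unfolding sgnm_def by (rule GT) auto
  also have "\<dots> = Jmat n"
    by (rule eq_matI) (auto simp: Jmat_entry)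
  finally show ?thesis unfolding symplectic_def sgnm_def by auto
qed

definition Pk :: "nat \<Rightarrow> real mat \<Rightarrow> nat \<Rightarrow> real mat" where
  "Pk n A k = mat (2*n) (2*n) (\<lambda>(r,c). if (r mod n < k \<or> c mod n < k) \<and> r mod n \<noteq> c mod n then 0 else A $$ (r,c))"

lemma pinch_step:
  assumes A: "A \<in> carrier_mat (2*n) (2*n)" and C: "in_conv_sympl_orbit n A (Pk n A k)"
  shows "in_conv_sympl_orbit n A (Pk n A (Suc k))"
proof -
  have Pc: "Pk n A k \<in> carrier_mat (2*n) (2*n)" unfolding Pk_def by auto
  have C2: "in_conv_sympl_orbit n A (transpose_mat (sgnm n k) * Pk n A k * sgnm n k)"
    by (rule conv_transport[OF C sgnm_sympl A])
  have e: "transpose_mat (sgnm n k) * Pk n A k * sgnm n k =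
     mat (2*n) (2*n) (\<lambda>(r,c). (if r mod n = k then -1 else 1) * (if c mod n = k then -1 else 1) * Pk n A k $$ (id r, id c))"
    unfolding sgnm_def by (rule GT[OF Pc]) auto
  have "mat (2*n) (2*n) (\<lambda>(r,c). (Pk n A k $$ (r,c) + (transpose_mat (sgnm n k) * Pk n A k * sgnm n k) $$ (r,c)) / 2)
     = Pk n A (Suc k)"
    unfolding e by (rule eq_matI) (auto simp: Pk_def)
  with conv_avg[OF C C2] show ?thesis by simp
qed

lemma pinch_all:
  assumes A: "A \<in> carrier_mat (2*n) (2*n)"
  shows "in_conv_sympl_orbit n A (Pk n A k)"
proof (induct k)
  case 0
  have "Pk n A 0 = A" using A by (intro eq_matI) (auto simp: Pk_def)
  then show ?case using conv_refl[OF A] by simp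
next
  case (Suc k)
  then show ?case using pinch_step[OF A] by blast
qed

lemma Delta_entry:
  assumes "pos_def (2*n) A" "A * Jmat n = Jmat n * A" "i < n"
  shows "Delta \<xi> n A ! i = A $$ (i,i)"
proof -
  have A: "A \<in> carrier_mat (2*n) (2*n)" and sym: "transpose_mat A = A" using assms unfolding pos_def_def by auto
  have pos: "A $$ (i,i) > 0" using pos_def_diag[OF assms(1)] assms(3) by auto
  note cs = comm_struct[OF A sym assms(2) assms(3)]
  have sq: "sqrt (((A $$ (i,i))\<^sup>2 + (A $$ (i,i))\<^sup>2) / 2) = A $$ (i,i)" using pos by simp
  show ?thesis using assms(3) sq cs
    by (cases \<xi>) (simp_all add: Delta_def D11_def D22_def D12_def)
qed

lemma part2:
  assumes "pos_def (2*n) A" "A * Jmat n = Jmat n * A"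
  shows "in_conv_sympl_orbit n A (dsum (diagm (Delta \<xi> n A)) (diagm (Delta \<xi> n A)))"
proof -
  have A: "A \<in> carrier_mat (2*n) (2*n)" and sym: "transpose_mat A = A" using assms unfolding pos_def_def by auto
  have len: "length (Delta \<xi> n A) = n" by (simp add: Delta_def)
  have "Pk n A n = dsum (diagm (Delta \<xi> n A)) (diagm (Delta \<xi> n A))"
  proof (rule eq_matI)
    fix r c assume r: "r < dim_row (dsum (diagm (Delta \<xi> n A)) (diagm (Delta \<xi> n A)))"
      and c: "c < dim_col (dsum (diagm (Delta \<xi> n A)) (diagm (Delta \<xi> n A)))"
    have r: "r < 2*n" and c: "c < 2*n" using r c dsum_carrier[of "Delta \<xi> n A"] len by auto
    then have n: "n > 0" by auto
    have rm: "r mod n < n" "c mod n < n" using n by auto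
    have de: "Delta \<xi> n A ! (r mod n) = A $$ (r mod n, r mod n)"
      using Delta_entry[OF assms rm(1)] .
    have rcases: "r = r mod n \<or> r = n + r mod n" using r n
      by (metis add.commute le_mod_geq mod_less not_le mult_2 add_less_cancel_left less_imp_diff_less le_add_diff_inverse)
    have ccases: "c = c mod n \<or> c = n + c mod n" using c n
      by (metis add.commute le_mod_geq mod_less not_le mult_2 add_less_cancel_left less_imp_diff_less le_add_diff_inverse)
    note cs = comm_struct[OF A sym assms(2) rm(1)]
    show "Pk n A n $$ (r,c) = dsum (diagm (Delta \<xi> n A)) (diagm (Delta \<xi> n A)) $$ (r,c)"
      unfolding dsum_entry[OF len r c] de using r c rm rcases ccases cs
      by (auto simp: Pk_def)
  qed (auto simp: Pk_def len dsum_def diagm_def mat_diag_def mult_2)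
  with pinch_all[OF A, of n] show ?thesis by simp
qed


lemma J_GT: "Jmat n = mat (2*n) (2*n) (\<lambda>(r,c). if r = (if c < n then c + n else c - n) then (if c < n then -1 else 1) else 0)"
  by (rule eq_matI) (auto simp: Jmat_entry)

lemma JTJ: "transpose_mat (Jmat n) * Jmat n = 1\<^sub>m (2*n)"
proof -
  have "transpose_mat (Jmat n) * 1\<^sub>m (2*n) * Jmat n = mat (2*n) (2*n) (\<lambda>(r,c). (if r < n then -1 else 1) * (if c < n then -1 else 1) *
     1\<^sub>m (2*n) $$ ((if r < n then r + n else r - n), (if c < n then c + n else c - n)))"
    by (subst (1 2) J_GT, rule GT) auto
  also have "\<dots> = 1\<^sub>m (2*n)" by (rule eq_matI) auto
  finally show ?thesis by simp
qed

lemma sympl_inverse: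
  assumes M: "symplectic n M"
  obtains N where "symplectic n N" "M * N = 1\<^sub>m (2*n)"
proof -
  have Mc: "M \<in> carrier_mat (2*n) (2*n)" and MJ: "transpose_mat M * Jmat n * M = Jmat n"
    using M unfolding symplectic_def by auto
  define N where "N = transpose_mat (Jmat n) * transpose_mat M * Jmat n"
  have Nc: "N \<in> carrier_mat (2*n) (2*n)" unfolding N_def using Mc by auto
  have "N * M = transpose_mat (Jmat n) * (transpose_mat M * Jmat n * M)"
    unfolding N_def using Mc by (simp add: assoc_mult_mat[of _ "2*n" "2*n" _ "2*n" _ "2*n"])
  also have "\<dots> = 1\<^sub>m (2*n)" unfolding MJ JTJ ..
  finally have NM: "N * M = 1\<^sub>m (2*n)" .
  have MN: "M * N = 1\<^sub>m (2*n)" by (rule mat_mult_left_right_inverse[OF Nc Mc NM])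
  have "transpose_mat N * Jmat n * N = transpose_mat N * (transpose_mat M * Jmat n * M) * N" unfolding MJ ..
  also have "\<dots> = transpose_mat (M * N) * Jmat n * (M * N)"
    by (rule cong_mult[symmetric, OF Mc Nc]) simp
  also have "\<dots> = Jmat n" unfolding MN by simp
  finally have "symplectic n N" unfolding symplectic_def using Nc by auto
  with MN that show ?thesis by blast
qed

lemma perm_dsum:
  fixes D :: "real list"
  assumes p: "p permutes {..<n}" and len: "length D = n"
  defines "P \<equiv> mat (2*n) (2*n) (\<lambda>(r,c). if r = (if c < n then p c else n + p (c - n)) then 1 else 0)"
  shows "symplectic n P" "transpose_mat P * dsum (diagm D) (diagm D) * P = dsum (diagm (permute_list p D)) (diagm (permute_list p D))"
proof -
  have pl: "\<And>c. c < n \<Longrightarrow> p c < n" using permutes_in_image[OF p] by auto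
  have pi: "\<And>a b. p a = p b \<longleftrightarrow> a = b" using permutes_inj[OF p] by (auto dest: injD)
  have g: "\<And>c. c < 2*n \<Longrightarrow> (if c < n then p c else n + p (c - n)) < 2*n"
  proof -
    fix c :: nat assume "c < 2*n" then show "(if c < n then p c else n + p (c - n)) < 2*n"
      using pl[of c] pl[of "c-n"] by auto
  qed
  have "transpose_mat P * Jmat n * P = mat (2*n) (2*n) (\<lambda>(r,c). 1 * 1 * Jmat n $$ ((if r < n then p r else n + p (r - n)), (if c < n then p c else n + p (c - n))))"
    unfolding P_def by (rule GT) (use g in auto)
  also have "\<dots> = Jmat n"
  proof (rule eq_matI)
    fix r c assume "r < dim_row (Jmat n)" "c < dim_col (Jmat n)"
    then have r: "r < 2*n" and c: "c < 2*n" by auto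
    show "mat (2*n) (2*n) (\<lambda>(r,c). 1 * 1 * Jmat n $$ ((if r < n then p r else n + p (r - n)), (if c < n then p c else n + p (c - n)))) $$ (r,c) = Jmat n $$ (r,c)"
      using r c g[OF r] g[OF c] pl[of r] pl[of c] pl[of "r-n"] pl[of "c-n"]
      by (cases "r < n"; cases "c < n") (simp_all add: Jmat_entry pi, linarith+)
  qed auto
  finally show "symplectic n P" unfolding symplectic_def P_def by auto
  have "transpose_mat P * dsum (diagm D) (diagm D) * P = mat (2*n) (2*n) (\<lambda>(r,c). 1 * 1 * dsum (diagm D) (diagm D) $$ ((if r < n then p r else n + p (r - n)), (if c < n then p c else n + p (c - n))))"
    unfolding P_def by (rule GT) (use g len in auto)
  also have "\<dots> = dsum (diagm (permute_list p D)) (diagm (permute_list p D))"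
  proof (rule eq_matI)
    have len2: "length (permute_list p D) = n" using len by simp
    fix r c assume "r < dim_row (dsum (diagm (permute_list p D)) (diagm (permute_list p D)))"
      "c < dim_col (dsum (diagm (permute_list p D)) (diagm (permute_list p D)))"
    then have r: "r < 2*n" and c: "c < 2*n" using dsum_carrier[of "permute_list p D"] len2 by auto
    have pln: "permute_list p D ! (r mod n) = D ! p (r mod n)"
      using r len p by (intro permute_list_nth) auto
    show "mat (2*n) (2*n) (\<lambda>(r,c). 1 * 1 * dsum (diagm D) (diagm D) $$ ((if r < n then p r else n + p (r - n)), (if c < n then p c else n + p (c - n)))) $$ (r,c)
       = dsum (diagm (permute_list p D)) (diagm (permute_list p D)) $$ (r,c)"
      unfolding dsum_entry[OF len2 r c] pln
      using r c g[OF r] g[OF c] pl[of r] pl[of c] pl[of "r-n"] pl[of "c-n"]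
      by (cases "r < n"; cases "c < n") (simp_all add: dsum_entry[OF len] pi le_mod_geq, linarith+)
  qed (use len in \<open>auto simp: dsum_def diagm_def mat_diag_def mult_2\<close>)
  finally show "transpose_mat P * dsum (diagm D) (diagm D) * P = dsum (diagm (permute_list p D)) (diagm (permute_list p D))" .
qed



definition hh :: "nat \<Rightarrow> (nat \<Rightarrow> real) \<Rightarrow> real mat" where
  "hh N w = mat N N (\<lambda>(i,j). (if i = j then 1 else 0) - 2 / (\<Sum>k<N. (w k)\<^sup>2) * w i * w j)"

lemma hh_carrier[simp]: "hh N w \<in> carrier_mat N N" unfolding hh_def by auto

lemma hh_dims[simp]: "dim_row (hh N w) = N" "dim_col (hh N w) = N" unfolding hh_def by auto

lemma hh_sym: "transpose_mat (hh N w) = hh N w"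
  unfolding hh_def by (rule eq_matI) auto

lemma hh_orth: "transpose_mat (hh N w) * hh N w = 1\<^sub>m N"
proof (rule eq_matI)
  fix i j assume "i < dim_row (1\<^sub>m N :: real mat)" "j < dim_col (1\<^sub>m N :: real mat)"
  then have i: "i < N" and j: "j < N" by auto
  define c where "c = 2 / (\<Sum>k<N. (w k)\<^sup>2)"
  define ww where "ww = (\<Sum>k<N. (w k)\<^sup>2)"
  have cww: "c * c * ww = 2 * c" unfolding c_def ww_def by (cases "(\<Sum>k<N. (w k)\<^sup>2) = 0") (auto simp: power2_eq_square)
  have "(transpose_mat (hh N w) * hh N w) $$ (i,j) = (\<Sum>k<N. hh N w $$ (k,i) * hh N w $$ (k,j))"
    using i j by (subst mult_entry[of _ N N _ N]) (auto intro!: sum.cong)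
  also have "\<dots> = (\<Sum>k<N. ((if k = i then 1 else 0) - c * w k * w i) * ((if k = j then 1 else 0) - c * w k * w j))"
    using i j by (intro sum.cong refl) (auto simp: hh_def c_def)
  also have "\<dots> = (\<Sum>k<N. (if k = i then (if k = j then 1 else 0) else 0) - (if k = i then c * w k * w j else 0)
      - (if k = j then c * w k * w i else 0) + c * c * w i * w j * (w k)\<^sup>2)"
    by (rule sum.cong) (auto simp: algebra_simps power2_eq_square)
  also have "\<dots> = (\<Sum>k<N. (if k = i then (if k = j then 1 else 0) else 0))
      - (\<Sum>k<N. (if k = i then c * w k * w j else 0))
      - (\<Sum>k<N. (if k = j then c * w k * w i else 0))
      + c * c * w i * w j * (\<Sum>k<N. (w k)\<^sup>2)"
    by (simp only: sum.distrib sum_subtractf sum_distrib_left[symmetric])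
  also have "\<dots> = (if i = j then 1 else 0) - c * w i * w j - c * w j * w i + c * c * ww * w i * w j"
    using i j by (simp add: sum.delta ww_def)
  also have "\<dots> = (if i = j then 1 else 0)" unfolding cww by (simp add: algebra_simps)
  finally show "(transpose_mat (hh N w) * hh N w) $$ (i,j) = 1\<^sub>m N $$ (i,j)" using i j by simp
qed auto

lemma hh_col:
  assumes k: "k < N" and u: "(\<Sum>i<N. (u i)\<^sup>2) = 1" and i: "i < N"
  shows "hh N (\<lambda>i. u i - (if i = k then 1 else 0)) $$ (i,k) = u i"
proof -
  define w where "w = (\<lambda>i. u i - (if i = k then 1 else (0::real)))"
  have ww: "(\<Sum>j<N. (w j)\<^sup>2) = 2 - 2 * u k"
  proof -
    have "(\<Sum>j<N. (w j)\<^sup>2) = (\<Sum>j<N. (u j)\<^sup>2 - 2 * (if j = k then u j else 0) + (if j = k then 1 else 0))"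
      by (rule sum.cong) (auto simp: w_def power2_eq_square algebra_simps)
    also have "\<dots> = (\<Sum>j<N. (u j)\<^sup>2) - 2 * (\<Sum>j<N. if j = k then u j else 0) + (\<Sum>j<N. if j = k then 1 else 0)"
      by (simp only: sum.distrib sum_subtractf sum_distrib_left[symmetric])
    finally have "(\<Sum>j<N. (w j)\<^sup>2) = (\<Sum>j<N. (u j)\<^sup>2) - 2 * (\<Sum>j<N. if j = k then u j else 0) + (\<Sum>j<N. if j = k then 1 else 0)" .
    then show ?thesis using k u by (simp add: sum.delta)
  qed
  show ?thesis
  proof (cases "u k = 1")
    case True
    then have "(\<Sum>j<N. (w j)\<^sup>2) = 0" using ww by simp
    then have "\<forall>j\<in>{..<N}. (w j)\<^sup>2 = 0" by (subst sum_nonneg_eq_0_iff[symmetric]) auto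
    then have wi: "w i = 0" using i by auto
    have "hh N w $$ (i,k) = (if i = k then 1 else 0) - 2 / (\<Sum>j<N. (w j)\<^sup>2) * w i * w k"
      unfolding hh_def using i k by simp
    also have "\<dots> = u i" using \<open>(\<Sum>j<N. (w j)\<^sup>2) = 0\<close> wi by (simp add: w_def split: if_splits)
    finally show ?thesis unfolding w_def .
  next
    case False
    have "hh N w $$ (i,k) = (if i = k then 1 else 0) - 2 / (2 - 2 * u k) * w i * (u k - 1)"
    proof -
      have "hh N w $$ (i,k) = (if i = k then 1 else 0) - 2 / (\<Sum>j<N. (w j)\<^sup>2) * w i * w k"
        unfolding hh_def using i k by simp
      moreover have "w k = u k - 1" by (simp add: w_def)
      ultimately show ?thesis unfolding ww by simp
    qed
    also have "\<dots> = (if i = k then 1 else 0) + w i"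
      using False by (simp add: field_simps)
    also have "\<dots> = u i" by (simp add: w_def)
    finally show ?thesis unfolding w_def .
  qed
qed

lemma hh_fix:
  assumes "w k = 0" "i < N" "k < N"
  shows "hh N w $$ (i,k) = (if i = k then 1 else 0)"
  using assms unfolding hh_def by auto


lemma sumsq_vec: "(v :: real vec) \<in> carrier_vec N \<Longrightarrow> v \<bullet> v = (\<Sum>i<N. (v $ i)\<^sup>2)"
  unfolding scalar_prod_def power2_eq_square by (auto simp: atLeast0LessThan)

lemma two_cols:
  fixes x y :: "nat \<Rightarrow> real"
  assumes N: "1 < N" and x1: "(\<Sum>i<N. (x i)\<^sup>2) = 1" and y1: "(\<Sum>i<N. (y i)\<^sup>2) = 1"
    and xy: "(\<Sum>i<N. x i * y i) = 0"
  shows "\<exists>Q. Q \<in> carrier_mat N N \<and> transpose_mat Q * Q = 1\<^sub>m N \<and> (\<forall>i<N. Q $$ (i,0) = x i \<and> Q $$ (i,1) = y i)"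
proof -
  define H1 where "H1 = hh N (\<lambda>i. x i - (if i = 0 then 1 else 0))"
  have H1c: "H1 \<in> carrier_mat N N" unfolding H1_def by simp
  have H1s: "transpose_mat H1 = H1" unfolding H1_def by (rule hh_sym)
  have H1o: "H1 * H1 = 1\<^sub>m N" using hh_orth[of N] H1s unfolding H1_def by metis
  have H10: "\<And>i. i < N \<Longrightarrow> H1 $$ (i,0) = x i" unfolding H1_def using N x1 by (intro hh_col) auto
  have H10': "\<And>i. i < N \<Longrightarrow> H1 $$ (0,i) = x i"
  proof -
    fix i assume i: "i < N"
    have "H1 $$ (0,i) = transpose_mat H1 $$ (i,0)" using i N H1c by auto
    then show "H1 $$ (0,i) = x i" using H1s H10[OF i] by simp
  qed
  define yv where "yv = vec N y"
  have yvc: "yv \<in> carrier_vec N" unfolding yv_def by simp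
  define y'v where "y'v = H1 *\<^sub>v yv"
  have y'vc: "y'v \<in> carrier_vec N" unfolding y'v_def using H1c yvc by simp
  have HH: "H1 *\<^sub>v (H1 *\<^sub>v yv) = yv"
  proof -
    have "H1 *\<^sub>v (H1 *\<^sub>v yv) = (H1 * H1) *\<^sub>v yv" by (rule assoc_mult_mat_vec[symmetric, OF H1c H1c yvc])
    then show ?thesis using H1o yvc by simp
  qed
  have y'0: "y'v $ 0 = 0"
  proof -
    have "y'v $ 0 = (\<Sum>l<N. H1 $$ (0,l) * y l)"
      unfolding y'v_def yv_def using N H1c by (simp add: scalar_prod_def atLeast0LessThan)
    also have "\<dots> = 0" using xy H10' by simp
    finally show ?thesis .
  qed
  have y'1: "(\<Sum>i<N. (y'v $ i)\<^sup>2) = 1"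
  proof -
    have "(transpose_mat H1 *\<^sub>v y'v) \<bullet> yv = y'v \<bullet> (H1 *\<^sub>v yv)"
      by (rule transpose_vec_mult_scalar[OF H1c yvc y'vc])
    moreover have "transpose_mat H1 *\<^sub>v y'v = yv"
      unfolding H1s y'v_def by (rule HH)
    ultimately have "y'v \<bullet> y'v = yv \<bullet> yv" unfolding y'v_def by simp
    then show ?thesis using sumsq_vec[OF y'vc] sumsq_vec[OF yvc] y1 by (simp add: yv_def)
  qed
  define H2 where "H2 = hh N (\<lambda>i. y'v $ i - (if i = 1 then 1 else 0))"
  have H2c: "H2 \<in> carrier_mat N N" unfolding H2_def by simp
  have H21: "\<And>i. i < N \<Longrightarrow> H2 $$ (i,1) = y'v $ i" unfolding H2_def using N y'1 by (intro hh_col) auto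
  have H20: "\<And>i. i < N \<Longrightarrow> H2 $$ (i,0) = (if i = 0 then 1 else 0)" unfolding H2_def using N y'0
    by (intro hh_fix) auto
  define Q where "Q = H1 * H2"
  have Qc: "Q \<in> carrier_mat N N" unfolding Q_def using H1c H2c by simp
  have "transpose_mat Q * 1\<^sub>m N * Q = transpose_mat H2 * (transpose_mat H1 * 1\<^sub>m N * H1) * H2"
    unfolding Q_def by (rule cong_mult[OF H1c H2c]) simp
  also have "transpose_mat H1 * 1\<^sub>m N * H1 = 1\<^sub>m N" using H1c H1s H1o by simp
  also have "transpose_mat H2 * 1\<^sub>m N * H2 = 1\<^sub>m N" using H2c hh_orth[of N] unfolding H2_def by simp
  finally have Qo: "transpose_mat Q * Q = 1\<^sub>m N" using Qc by simp
  have col1: "col H2 1 = y'v" using H21 H2c y'vc N by (intro eq_vecI) auto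
  have col0: "col H2 0 = unit_vec N 0" using H20 H2c N by (intro eq_vecI) auto
  have "\<forall>i<N. Q $$ (i,0) = x i \<and> Q $$ (i,1) = y i"
  proof (intro allI impI conjI)
    fix i assume i: "i < N"
    have "Q $$ (i,0) = row H1 i \<bullet> unit_vec N 0" unfolding Q_def using i N H1c H2c col0 by simp
    also have "\<dots> = H1 $$ (i,0)" using i N H1c by simp
    finally show "Q $$ (i,0) = x i" using H10[OF i] by simp
    have "Q $$ (i,1) = row H1 i \<bullet> y'v" unfolding Q_def using i N H1c H2c col1 by simp
    also have "\<dots> = (H1 *\<^sub>v y'v) $ i" using i H1c by simp
    also have "H1 *\<^sub>v y'v = yv" unfolding y'v_def by (rule HH)
    finally show "Q $$ (i,1) = y i" using i by (simp add: yv_def)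
  qed
  then show ?thesis using Qc Qo by blast
qed



definition asym_mat :: "nat \<Rightarrow> real mat \<Rightarrow> bool" where
  "asym_mat N W \<longleftrightarrow> W \<in> carrier_mat N N \<and> (\<forall>i<N. \<forall>j<N. W $$ (j,i) = - W $$ (i,j))"

definition nonsing_mat :: "nat \<Rightarrow> real mat \<Rightarrow> bool" where
  "nonsing_mat N W \<longleftrightarrow> (\<forall>v \<in> carrier_vec N. W *\<^sub>v v = 0\<^sub>v N \<longrightarrow> v = 0\<^sub>v N)"

lemma asym_form:
  assumes "asym_mat N W"
  shows "(\<Sum>i<N. u i * (\<Sum>j<N. W $$ (i,j) * w j)) = - (\<Sum>i<N. w i * (\<Sum>j<N. W $$ (i,j) * u j))"
proof -
  have "(\<Sum>i<N. u i * (\<Sum>j<N. W $$ (i,j) * w j)) = (\<Sum>i<N. \<Sum>j<N. u i * W $$ (i,j) * w j)"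
    by (simp add: sum_distrib_left mult.assoc)
  also have "\<dots> = (\<Sum>j<N. \<Sum>i<N. u i * W $$ (i,j) * w j)" by (rule sum.swap)
  also have "\<dots> = (\<Sum>j<N. \<Sum>i<N. - (w j * (W $$ (j,i) * u i)))"
  proof (intro sum.cong refl)
    fix j i assume "j \<in> {..<N}" "i \<in> {..<N}"
    then have "W $$ (i,j) = - W $$ (j,i)" using assms unfolding asym_mat_def by blast
    then show "u i * W $$ (i,j) * w j = - (w j * (W $$ (j,i) * u i))" by simp
  qed
  also have "\<dots> = - (\<Sum>i<N. w i * (\<Sum>j<N. W $$ (i,j) * u j))"
    by (simp add: sum_distrib_left sum_negf)
  finally show ?thesis .
qed

lemma vec_zero_from_rows:
  assumes "nonsing_mat N W" "W \<in> carrier_mat N N" "\<forall>i<N. (\<Sum>j<N. W $$ (i,j) * u j) = 0"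
  shows "\<forall>i<N. u i = 0"
proof -
  have "W *\<^sub>v vec N u = 0\<^sub>v N"
    using assms(2,3) by (intro eq_vecI) (auto simp: scalar_prod_def atLeast0LessThan)
  then have "vec N u = 0\<^sub>v N" using assms(1) unfolding nonsing_mat_def by auto
  then show ?thesis by (metis index_vec index_zero_vec(1))
qed

lemma sum_rows_cong:
  assumes "\<And>i. i < N \<Longrightarrow> (\<Sum>j<N. W $$ (i,j) * u j) = f i"
  shows "(\<Sum>i<N. z i * (\<Sum>j<N. W $$ (i,j) * u j)) = (\<Sum>i<N. z i * f i)"
  using assms by (intro sum.cong) auto

lemma eigen_pair:
  assumes as: "asym_mat N W" and ns: "nonsing_mat N W" and N: "0 < N"
  shows "\<exists>x y b. b > 0 \<and> (\<Sum>i<N. (x i)\<^sup>2) = 1 \<and> (\<Sum>i<N. (y i)\<^sup>2) = 1 \<and> (\<Sum>i<N. x i * y i) = 0 \<and>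
     (\<forall>i<N. (\<Sum>j<N. W $$ (i,j) * x j) = - b * y i) \<and> (\<forall>i<N. (\<Sum>j<N. W $$ (i,j) * y j) = b * x i)"
proof -
  have Wc: "W \<in> carrier_mat N N" using as unfolding asym_mat_def by blast
  define Wc' where "Wc' = map_mat complex_of_real W"
  have Wcc: "Wc' \<in> carrier_mat N N" unfolding Wc'_def using Wc by simp
  from spectrum_non_empty[OF Wcc N] obtain lam where "eigenvalue Wc' lam" unfolding spectrum_def by auto
  then obtain v where v: "v \<in> carrier_vec N" "v \<noteq> 0\<^sub>v N" and ev: "Wc' *\<^sub>v v = lam \<cdot>\<^sub>v v"
    unfolding eigenvalue_def eigenvector_def using Wcc by auto
  define x where "x j = Re (v $ j)" for j
  define y where "y j = Im (v $ j)" for j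
  define a where "a = Re lam"
  define c where "c = Im lam"
  have row: "\<And>i. i < N \<Longrightarrow> (\<Sum>j<N. complex_of_real (W $$ (i,j)) * v $ j) = lam * v $ i"
  proof -
    fix i assume i: "i < N"
    have "(Wc' *\<^sub>v v) $ i = (\<Sum>j<N. complex_of_real (W $$ (i,j)) * v $ j)"
      using i Wc v unfolding Wc'_def by (simp add: scalar_prod_def atLeast0LessThan)
    then show "(\<Sum>j<N. complex_of_real (W $$ (i,j)) * v $ j) = lam * v $ i" using ev i v by simp
  qed
  have Wx: "\<And>i. i < N \<Longrightarrow> (\<Sum>j<N. W $$ (i,j) * x j) = a * x i - c * y i"
  proof -
    fix i assume i: "i < N"
    have "Re (\<Sum>j<N. complex_of_real (W $$ (i,j)) * v $ j) = Re (lam * v $ i)" using row[OF i] by simp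
    then show "(\<Sum>j<N. W $$ (i,j) * x j) = a * x i - c * y i" by (simp add: Re_sum x_def y_def a_def c_def)
  qed
  have Wy: "\<And>i. i < N \<Longrightarrow> (\<Sum>j<N. W $$ (i,j) * y j) = a * y i + c * x i"
  proof -
    fix i assume i: "i < N"
    have "Im (\<Sum>j<N. complex_of_real (W $$ (i,j)) * v $ j) = Im (lam * v $ i)" using row[OF i] by simp
    then show "(\<Sum>j<N. W $$ (i,j) * y j) = a * y i + c * x i" by (simp add: Im_sum x_def y_def a_def c_def algebra_simps)
  qed
  define X where "X = (\<Sum>i<N. (x i)\<^sup>2)"
  define Y where "Y = (\<Sum>i<N. (y i)\<^sup>2)"
  define P where "P = (\<Sum>i<N. x i * y i)"
  have XYpos: "X + Y > 0"
  proof -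
    have "\<exists>i<N. v $ i \<noteq> 0"
    proof (rule ccontr)
      assume "\<not> (\<exists>i<N. v $ i \<noteq> 0)"
      then have "v = 0\<^sub>v N" using v(1) by (intro eq_vecI) auto
      with v(2) show False by simp
    qed
    then obtain i where i: "i < N" and vi: "v $ i \<noteq> 0" by blast
    then have "x i \<noteq> 0 \<or> y i \<noteq> 0" unfolding x_def y_def by (auto simp: complex_eq_iff)
    then have "(x i)\<^sup>2 + (y i)\<^sup>2 > 0" by (auto simp: sum_power2_gt_zero_iff)
    also have "(x i)\<^sup>2 + (y i)\<^sup>2 \<le> X + Y"
    proof -
      have "(x i)\<^sup>2 \<le> X" unfolding X_def using i by (intro member_le_sum) auto
      moreover have "(y i)\<^sup>2 \<le> Y" unfolding Y_def using i by (intro member_le_sum) auto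
      ultimately show ?thesis by simp
    qed
    finally show ?thesis .
  qed
  have f0: "\<And>u. (\<Sum>i<N. u i * (\<Sum>j<N. W $$ (i,j) * u j)) = 0"
  proof -
    fix u :: "nat \<Rightarrow> real"
    show "(\<Sum>i<N. u i * (\<Sum>j<N. W $$ (i,j) * u j)) = 0" using asym_form[OF as, of u u] by linarith
  qed
  have Qxx: "(\<Sum>i<N. x i * (\<Sum>j<N. W $$ (i,j) * x j)) = a * X - c * P"
  proof -
    have "(\<Sum>i<N. x i * (\<Sum>j<N. W $$ (i,j) * x j)) = (\<Sum>i<N. a * (x i)\<^sup>2 - c * (x i * y i))"
    proof (rule sum.cong[OF refl])
      fix i assume "i \<in> {..<N}"
      then have e: "(\<Sum>j<N. W $$ (i,j) * x j) = a * x i - c * y i" by (simp add: Wx)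
      show "x i * (\<Sum>j<N. W $$ (i,j) * x j) = a * (x i)\<^sup>2 - c * (x i * y i)"
        unfolding e by (simp add: algebra_simps power2_eq_square)
    qed
    then show ?thesis unfolding X_def P_def by (simp add: sum_subtractf sum_distrib_left)
  qed
  have Qyy: "(\<Sum>i<N. y i * (\<Sum>j<N. W $$ (i,j) * y j)) = a * Y + c * P"
  proof -
    have "(\<Sum>i<N. y i * (\<Sum>j<N. W $$ (i,j) * y j)) = (\<Sum>i<N. y i * (a * y i + c * x i))"
      by (rule sum_rows_cong[OF Wy])
    then show ?thesis unfolding Y_def P_def by (simp add: sum_distrib_left sum.distrib algebra_simps power2_eq_square)
  qed
  have a0: "a = 0"
  proof -
    have "a * (X + Y) = 0" using Qxx Qyy f0[of x] f0[of y] by (simp add: algebra_simps)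
    then show ?thesis using XYpos by simp
  qed
  have c0: "c \<noteq> 0"
  proof
    assume c: "c = 0"
    have "\<forall>i<N. x i = 0" using vec_zero_from_rows[OF ns Wc] Wx a0 c by simp
    moreover have "\<forall>i<N. y i = 0" using vec_zero_from_rows[OF ns Wc] Wy a0 c by simp
    ultimately have "X + Y = 0" unfolding X_def Y_def by simp
    then show False using XYpos by simp
  qed
  have P0: "P = 0" using Qxx f0[of x] a0 c0 by simp
  have Qxy: "(\<Sum>i<N. x i * (\<Sum>j<N. W $$ (i,j) * y j)) = c * X"
  proof -
    have "(\<Sum>i<N. x i * (\<Sum>j<N. W $$ (i,j) * y j)) = (\<Sum>i<N. x i * (a * y i + c * x i))"
      by (rule sum_rows_cong[OF Wy])
    then show ?thesis unfolding X_def by (simp add: a0 sum_distrib_left algebra_simps power2_eq_square)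
  qed
  have Qyx: "(\<Sum>i<N. y i * (\<Sum>j<N. W $$ (i,j) * x j)) = - c * Y"
  proof -
    have "(\<Sum>i<N. y i * (\<Sum>j<N. W $$ (i,j) * x j)) = (\<Sum>i<N. y i * (a * x i - c * y i))"
      by (rule sum_rows_cong[OF Wx])
    then show ?thesis unfolding Y_def by (simp add: a0 sum_distrib_left sum_negf algebra_simps power2_eq_square)
  qed
  have XY: "X = Y" using asym_form[OF as, of x y] Qxy Qyx c0 by simp
  have Xpos: "X > 0" using XY XYpos by simp
  define s where "s = sqrt X"
  have s: "s > 0" "s * s = X" unfolding s_def using Xpos by auto
  define x' where "x' i = x i / s" for i
  define y' where "y' i = y i / s" for i
  have x'1: "(\<Sum>i<N. (x' i)\<^sup>2) = 1"
    unfolding x'_def using s X_def Xpos by (simp add: power_divide sum_divide_distrib[symmetric] power2_eq_square)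
  have y'1: "(\<Sum>i<N. (y' i)\<^sup>2) = 1"
    unfolding y'_def using s Y_def XY Xpos by (simp add: power_divide sum_divide_distrib[symmetric] power2_eq_square)
  have x'y': "(\<Sum>i<N. x' i * y' i) = 0"
    unfolding x'_def y'_def using P0 P_def by (simp add: sum_divide_distrib[symmetric])
  have Wx': "\<forall>i<N. (\<Sum>j<N. W $$ (i,j) * x' j) = - c * y' i"
    unfolding x'_def y'_def using Wx a0 by (simp add: sum_divide_distrib[symmetric])
  have Wy': "\<forall>i<N. (\<Sum>j<N. W $$ (i,j) * y' j) = c * x' i"
    unfolding x'_def y'_def using Wy a0 by (simp add: sum_divide_distrib[symmetric])
  show ?thesis
  proof (cases "c > 0")
    case True
    show ?thesis
      apply (rule exI[of _ x'], rule exI[of _ y'], rule exI[of _ c])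
      using True x'1 y'1 x'y' Wx' Wy' by (intro conjI)
  next
    case False
    then have m1: "- c > 0" using c0 by simp
    have m2: "(\<Sum>i<N. y' i * x' i) = 0" using x'y' by (simp add: mult.commute)
    have m3: "\<forall>i<N. (\<Sum>j<N. W $$ (i,j) * y' j) = - (- c) * x' i" using Wy' by simp
    have m4: "\<forall>i<N. (\<Sum>j<N. W $$ (i,j) * x' j) = (- c) * y' i" using Wx' by simp
    show ?thesis
      apply (rule exI[of _ y'], rule exI[of _ x'], rule exI[of _ "- c"])
      using m1 m2 m3 m4 x'1 y'1 by (intro conjI)
  qed
qed



lemma cong_asym:
  assumes as: "asym_mat N W" and P: "P \<in> carrier_mat N N"
  shows "asym_mat N (transpose_mat P * W * P)"
proof -
  have Wc: "W \<in> carrier_mat N N" using as unfolding asym_mat_def by blast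
  have "\<forall>i<N. \<forall>j<N. (transpose_mat P * W * P) $$ (j,i) = - (transpose_mat P * W * P) $$ (i,j)"
  proof (intro allI impI)
    fix i j assume i: "i < N" and j: "j < N"
    have "(transpose_mat P * W * P) $$ (j,i) = (\<Sum>a<N. \<Sum>b<N. P $$ (a,j) * W $$ (a,b) * P $$ (b,i))"
      by (rule triple_entry[OF P Wc P j i])
    also have "\<dots> = (\<Sum>b<N. \<Sum>a<N. P $$ (a,j) * W $$ (a,b) * P $$ (b,i))" by (rule sum.swap)
    also have "\<dots> = (\<Sum>b<N. \<Sum>a<N. - (P $$ (b,i) * W $$ (b,a) * P $$ (a,j)))"
    proof (intro sum.cong refl)
      fix b a assume "b \<in> {..<N}" "a \<in> {..<N}"
      then have "W $$ (a,b) = - W $$ (b,a)" using as unfolding asym_mat_def by blast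
      then show "P $$ (a,j) * W $$ (a,b) * P $$ (b,i) = - (P $$ (b,i) * W $$ (b,a) * P $$ (a,j))" by simp
    qed
    also have "\<dots> = - (\<Sum>b<N. \<Sum>a<N. P $$ (b,i) * W $$ (b,a) * P $$ (a,j))" by (simp add: sum_negf)
    also have "(\<Sum>b<N. \<Sum>a<N. P $$ (b,i) * W $$ (b,a) * P $$ (a,j)) = (transpose_mat P * W * P) $$ (i,j)"
      by (rule triple_entry[OF P Wc P i j, symmetric])
    finally show "(transpose_mat P * W * P) $$ (j,i) = - (transpose_mat P * W * P) $$ (i,j)" .
  qed
  moreover have "transpose_mat P * W * P \<in> carrier_mat N N" using P Wc by auto
  ultimately show ?thesis unfolding asym_mat_def by blast
qed

lemma mat_mult_zero_vec[simp]:
  fixes A :: "real mat"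
  shows "A \<in> carrier_mat nr nc \<Longrightarrow> A *\<^sub>v 0\<^sub>v nc = 0\<^sub>v nr"
  by (intro eq_vecI) (auto simp: scalar_prod_def)

lemma cong_nonsing:
  fixes W P R :: "real mat"
  assumes ns: "nonsing_mat N W" and Wc: "W \<in> carrier_mat N N" and P: "P \<in> carrier_mat N N"
    and R: "R \<in> carrier_mat N N" and RP: "R * P = 1\<^sub>m N"
  shows "nonsing_mat N (transpose_mat P * W * P)"
  unfolding nonsing_mat_def
proof (intro ballI impI)
  fix v :: "real vec" assume v: "v \<in> carrier_vec N" and K: "(transpose_mat P * W * P) *\<^sub>v v = 0\<^sub>v N"
  have PR: "P * R = 1\<^sub>m N" by (rule mat_mult_left_right_inverse[OF R P RP])
  have RTPT: "transpose_mat R * transpose_mat P = 1\<^sub>m N"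
    using transpose_mult[OF P R] PR by simp
  have e: "transpose_mat R * (transpose_mat P * W * P) = W * P"
  proof -
    have "transpose_mat R * (transpose_mat P * W * P) = (transpose_mat R * transpose_mat P) * W * P"
      using R P Wc by (simp add: assoc_mult_mat[of _ N N _ N _ N])
    then show ?thesis unfolding RTPT using Wc P by simp
  qed
  have "W *\<^sub>v (P *\<^sub>v v) = (W * P) *\<^sub>v v" using Wc P v by simp
  also have "\<dots> = (transpose_mat R * (transpose_mat P * W * P)) *\<^sub>v v" unfolding e ..
  also have "\<dots> = transpose_mat R *\<^sub>v ((transpose_mat P * W * P) *\<^sub>v v)"
    by (rule assoc_mult_mat_vec[of _ N N _ N]) (use R P Wc v in auto)
  also have "\<dots> = 0\<^sub>v N" unfolding K using R by simp
  finally have "P *\<^sub>v v = 0\<^sub>v N" using ns P v unfolding nonsing_mat_def by auto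
  then have "R *\<^sub>v (P *\<^sub>v v) = 0\<^sub>v N" using R by simp
  moreover have "R *\<^sub>v (P *\<^sub>v v) = v" using R P v RP by (simp add: assoc_mult_mat_vec[symmetric])
  ultimately show "v = 0\<^sub>v N" by simp
qed

definition bd :: "nat \<Rightarrow> (nat \<Rightarrow> real) \<Rightarrow> real mat" where
  "bd N s = mat N N (\<lambda>(i,j). if even i \<and> j = Suc i then s (i div 2) else if odd i \<and> i = Suc j then - s (i div 2) else 0)"

lemma deflate:
  fixes X Y O2 :: "real mat"
  assumes X: "X \<in> carrier_mat k k" and Y: "Y \<in> carrier_mat m m" and O2: "O2 \<in> carrier_mat m m"
  shows "transpose_mat (four_block_mat (1\<^sub>m k) (0\<^sub>m k m) (0\<^sub>m m k) O2) * four_block_mat X (0\<^sub>m k m) (0\<^sub>m m k) Y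
     * four_block_mat (1\<^sub>m k) (0\<^sub>m k m) (0\<^sub>m m k) O2 = four_block_mat X (0\<^sub>m k m) (0\<^sub>m m k) (transpose_mat O2 * Y * O2)"
proof -
  have t: "transpose_mat (four_block_mat (1\<^sub>m k) (0\<^sub>m k m) (0\<^sub>m m k) O2) = four_block_mat (1\<^sub>m k) (0\<^sub>m k m) (0\<^sub>m m k) (transpose_mat O2)"
    using O2 by (subst transpose_four_block_mat[of _ k k _ m _ m]) auto
  have "four_block_mat (1\<^sub>m k) (0\<^sub>m k m) (0\<^sub>m m k) (transpose_mat O2) * four_block_mat X (0\<^sub>m k m) (0\<^sub>m m k) Y
     = four_block_mat X (0\<^sub>m k m) (0\<^sub>m m k) (transpose_mat O2 * Y)"
    using X Y O2 by (subst mult_four_block_mat[of _ k k _ m _ m _ _ k _ m]) auto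
  moreover have "four_block_mat X (0\<^sub>m k m) (0\<^sub>m m k) (transpose_mat O2 * Y) * four_block_mat (1\<^sub>m k) (0\<^sub>m k m) (0\<^sub>m m k) O2
     = four_block_mat X (0\<^sub>m k m) (0\<^sub>m m k) (transpose_mat O2 * Y * O2)"
    using X Y O2 by (subst mult_four_block_mat[of _ k k _ m _ m _ _ k _ m]) auto
  ultimately show ?thesis unfolding t by simp
qed



lemma triple_col:
  fixes P W Q :: "real mat"
  assumes P: "P \<in> carrier_mat N N" and W: "W \<in> carrier_mat N N" and Q: "Q \<in> carrier_mat N N"
    and i: "i < N" and k: "k < N" and u: "\<And>c. c < N \<Longrightarrow> Q $$ (c,k) = u c"
  shows "(transpose_mat P * W * Q) $$ (i,k) = (\<Sum>a<N. P $$ (a,i) * (\<Sum>c<N. W $$ (a,c) * u c))"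
proof -
  have "(transpose_mat P * W * Q) $$ (i,k) = (\<Sum>a<N. \<Sum>c<N. P $$ (a,i) * W $$ (a,c) * Q $$ (c,k))"
    by (rule triple_entry[OF P W Q i k])
  also have "\<dots> = (\<Sum>a<N. \<Sum>c<N. P $$ (a,i) * (W $$ (a,c) * u c))"
    using u by (intro sum.cong refl) (simp add: mult.assoc)
  also have "\<dots> = (\<Sum>a<N. P $$ (a,i) * (\<Sum>c<N. W $$ (a,c) * u c))"
    by (simp add: sum_distrib_left)
  finally show ?thesis .
qed

lemma zero_mat_mult_vec[simp]:
  "(v :: real vec) \<in> carrier_vec nc \<Longrightarrow> 0\<^sub>m nr nc *\<^sub>v v = 0\<^sub>v nr"
  by (intro eq_vecI) (auto simp: scalar_prod_def)

lemma nf_step: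
  assumes as: "asym_mat (2+m) W" and ns: "nonsing_mat (2+m) W"
  shows "\<exists>Q b W2. Q \<in> carrier_mat (2+m) (2+m) \<and> transpose_mat Q * Q = 1\<^sub>m (2+m) \<and> b > 0 \<and>
    asym_mat m W2 \<and> nonsing_mat m W2 \<and>
    transpose_mat Q * W * Q = four_block_mat (bd 2 (\<lambda>_. b)) (0\<^sub>m 2 m) (0\<^sub>m m 2) W2"
proof -
  let ?N = "2+m"
  have Wc: "W \<in> carrier_mat ?N ?N" using as unfolding asym_mat_def by blast
  obtain x y b where b: "b > 0" and x1: "(\<Sum>i<?N. (x i)\<^sup>2) = 1" and y1: "(\<Sum>i<?N. (y i)\<^sup>2) = 1"
    and xy: "(\<Sum>i<?N. x i * y i) = 0" and Wx: "\<forall>i<?N. (\<Sum>j<?N. W $$ (i,j) * x j) = - b * y i"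
    and Wy: "\<forall>i<?N. (\<Sum>j<?N. W $$ (i,j) * y j) = b * x i"
    using eigen_pair[OF as ns] by auto
  obtain Q where Qc: "Q \<in> carrier_mat ?N ?N" and Qo: "transpose_mat Q * Q = 1\<^sub>m ?N"
    and Qxy: "\<forall>i<?N. Q $$ (i,0) = x i \<and> Q $$ (i,1) = y i"
    using two_cols[of ?N x y] x1 y1 xy by auto
  define W1 where "W1 = transpose_mat Q * W * Q"
  have W1c: "W1 \<in> carrier_mat ?N ?N" unfolding W1_def using Qc Wc by auto
  have as1: "asym_mat ?N W1" unfolding W1_def by (rule cong_asym[OF as Qc])
  have ns1: "nonsing_mat ?N W1" unfolding W1_def
    by (rule cong_nonsing[OF ns Wc Qc _ Qo]) (use Qc in auto)
  have QQ: "\<And>i j. i < ?N \<Longrightarrow> j < ?N \<Longrightarrow> (\<Sum>a<?N. Q $$ (a,i) * Q $$ (a,j)) = (if i = j then 1 else 0)"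
  proof -
    fix i j assume i: "i < ?N" and j: "j < ?N"
    have "(transpose_mat Q * Q) $$ (i,j) = (\<Sum>a<?N. transpose_mat Q $$ (i,a) * Q $$ (a,j))"
      using Qc i j by (intro mult_entry) auto
    also have "\<dots> = (\<Sum>a<?N. Q $$ (a,i) * Q $$ (a,j))" using Qc i by (intro sum.cong refl) auto
    finally show "(\<Sum>a<?N. Q $$ (a,i) * Q $$ (a,j)) = (if i = j then 1 else 0)" using Qo i j by simp
  qed
  have col0: "\<And>i. i < ?N \<Longrightarrow> W1 $$ (i,0) = - b * (if i = 1 then 1 else 0)"
  proof -
    fix i assume i: "i < ?N"
    have "W1 $$ (i,0) = (\<Sum>a<?N. Q $$ (a,i) * (\<Sum>c<?N. W $$ (a,c) * x c))"
      unfolding W1_def by (rule triple_col[OF Qc Wc Qc i]) (use Qxy in auto)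
    also have "\<dots> = (\<Sum>a<?N. Q $$ (a,i) * (- b * Q $$ (a,1)))"
      using Wx Qxy by (intro sum.cong refl) auto
    also have "\<dots> = - b * (\<Sum>a<?N. Q $$ (a,i) * Q $$ (a,1))"
      unfolding sum_distrib_left by (rule sum.cong[OF refl]) (simp add: mult_ac)
    finally show "W1 $$ (i,0) = - b * (if i = 1 then 1 else 0)" using QQ[OF i, of 1] by simp
  qed
  have col1: "\<And>i. i < ?N \<Longrightarrow> W1 $$ (i,1) = b * (if i = 0 then 1 else 0)"
  proof -
    fix i assume i: "i < ?N"
    have "W1 $$ (i,1) = (\<Sum>a<?N. Q $$ (a,i) * (\<Sum>c<?N. W $$ (a,c) * y c))"
      unfolding W1_def by (rule triple_col[OF Qc Wc Qc i]) (use Qxy in auto)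
    also have "\<dots> = (\<Sum>a<?N. Q $$ (a,i) * (b * Q $$ (a,0)))"
      using Wy Qxy by (intro sum.cong refl) auto
    also have "\<dots> = b * (\<Sum>a<?N. Q $$ (a,i) * Q $$ (a,0))"
      unfolding sum_distrib_left by (rule sum.cong[OF refl]) (simp add: mult_ac)
    finally show "W1 $$ (i,1) = b * (if i = 0 then 1 else 0)" using QQ[OF i, of 0] by simp
  qed
  have asW1: "\<And>i j. i < ?N \<Longrightarrow> j < ?N \<Longrightarrow> W1 $$ (j,i) = - W1 $$ (i,j)"
    using as1 unfolding asym_mat_def by blast
  have row0: "\<And>j. j < ?N \<Longrightarrow> W1 $$ (0,j) = b * (if j = 1 then 1 else 0)"
  proof -
    fix j assume j: "j < ?N"
    have "W1 $$ (0,j) = - W1 $$ (j,0)" using asW1[OF j, of 0] by simp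
    then show "W1 $$ (0,j) = b * (if j = 1 then 1 else 0)" using col0[OF j] by simp
  qed
  have row1: "\<And>j. j < ?N \<Longrightarrow> W1 $$ (1,j) = - b * (if j = 0 then 1 else 0)"
  proof -
    fix j assume j: "j < ?N"
    have "W1 $$ (1,j) = - W1 $$ (j,1)" using asW1[OF j, of 1] by simp
    then show "W1 $$ (1,j) = - b * (if j = 0 then 1 else 0)" using col1[OF j] by simp
  qed
  define W2 where "W2 = mat m m (\<lambda>(i,j). W1 $$ (i+2, j+2))"
  have W2c: "W2 \<in> carrier_mat m m" unfolding W2_def by auto
  have as2: "asym_mat m W2"
  proof -
    have "\<forall>i<m. \<forall>j<m. W2 $$ (j,i) = - W2 $$ (i,j)"
    proof (intro allI impI)
      fix i j assume i: "i < m" and j: "j < m"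
      have "W1 $$ (j+2,i+2) = - W1 $$ (i+2,j+2)" using asW1[of "i+2" "j+2"] i j by simp
      then show "W2 $$ (j,i) = - W2 $$ (i,j)" using i j unfolding W2_def by simp
    qed
    then show ?thesis unfolding asym_mat_def using W2c by blast
  qed
  have W1eq: "W1 = four_block_mat (bd 2 (\<lambda>_. b)) (0\<^sub>m 2 m) (0\<^sub>m m 2) W2"
  proof (rule eq_matI)
    fix i j assume i: "i < dim_row (four_block_mat (bd 2 (\<lambda>_. b)) (0\<^sub>m 2 m) (0\<^sub>m m 2) W2)"
      and j: "j < dim_col (four_block_mat (bd 2 (\<lambda>_. b)) (0\<^sub>m 2 m) (0\<^sub>m m 2) W2)"
    have i': "i < ?N" and j': "j < ?N" using i j W2c by (auto simp: bd_def)
    show "W1 $$ (i,j) = four_block_mat (bd 2 (\<lambda>_. b)) (0\<^sub>m 2 m) (0\<^sub>m m 2) W2 $$ (i,j)"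
    proof (cases "i < 2")
      case True
      then have "i = 0 \<or> i = 1" by auto
      then show ?thesis
      proof
        assume i0: "i = 0"
        show ?thesis using row0[OF j'] i0 j' W2c by (auto simp: bd_def)
      next
        assume i1: "i = 1"
        show ?thesis using row1[OF j'] i1 j' W2c by (auto simp: bd_def)
      qed
    next
      case False
      show ?thesis
      proof (cases "j < 2")
        case True
        then have "j = 0 \<or> j = 1" by auto
        then show ?thesis using col0[OF i'] col1[OF i'] False i' W2c by (auto simp: bd_def)
      next
        case False2: False
        have ss: "Suc (Suc (i - 2)) = i" "Suc (Suc (j - 2)) = j" using False False2 by arith+
        have "W2 $$ (i-2, j-2) = W1 $$ (i,j)" using False False2 i' j' unfolding W2_def by (simp add: ss)
        then show ?thesis using False False2 i' j' W2c by (simp add: bd_def)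
      qed
    qed
  qed (use W1c W2c in \<open>auto simp: bd_def\<close>)
  have ns2: "nonsing_mat m W2"
    unfolding nonsing_mat_def
  proof (intro ballI impI)
    fix v :: "real vec" assume v: "v \<in> carrier_vec m" and W2v: "W2 *\<^sub>v v = 0\<^sub>v m"
    have bdc: "bd 2 (\<lambda>_. b) \<in> carrier_mat 2 2" by (simp add: bd_def)
    have "W1 *\<^sub>v (0\<^sub>v 2 @\<^sub>v v) = (bd 2 (\<lambda>_. b) *\<^sub>v 0\<^sub>v 2 + 0\<^sub>m 2 m *\<^sub>v v) @\<^sub>v (0\<^sub>m m 2 *\<^sub>v 0\<^sub>v 2 + W2 *\<^sub>v v)"
      unfolding W1eq by (rule four_block_mat_mult_vec[OF bdc _ _ W2c]) (use v in auto)
    also have "\<dots> = 0\<^sub>v ?N" unfolding W2v using v bdc by (intro eq_vecI) auto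
    finally have z: "W1 *\<^sub>v (0\<^sub>v 2 @\<^sub>v v) = 0\<^sub>v ?N" .
    have c: "0\<^sub>v 2 @\<^sub>v v \<in> carrier_vec ?N" by (rule append_carrier_vec[OF _ v]) simp
    have "0\<^sub>v 2 @\<^sub>v v = 0\<^sub>v ?N" using ns1[unfolded nonsing_mat_def, rule_format, OF c z] .
    then have e: "\<And>i. (0\<^sub>v 2 @\<^sub>v v) $ (2 + i) = 0\<^sub>v ?N $ (2 + i)" by simp
    show "v = 0\<^sub>v m"
    proof (rule eq_vecI)
      fix i assume "i < dim_vec (0\<^sub>v m :: real vec)"
      then have i: "i < m" by simp
      have "(0\<^sub>v 2 @\<^sub>v v) $ (2 + i) = v $ i" using v i by simp
      then show "v $ i = 0\<^sub>v m $ i" using e[of i] i by simp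
    qed (use v in simp)
  qed
  show ?thesis using Qc Qo b as2 ns2 W1eq unfolding W1_def by blast
qed



lemma bd_split:
  assumes s: "s = (\<lambda>k. if k = 0 then b else s2 (k - 1))"
  shows "four_block_mat (bd 2 (\<lambda>_. b)) (0\<^sub>m 2 m) (0\<^sub>m m 2) (bd m s2) = bd (2+m) s"
proof (rule eq_matI)
  fix i j assume "i < dim_row (bd (2+m) s)" "j < dim_col (bd (2+m) s)"
  then have i: "i < 2+m" and j: "j < 2+m" by (auto simp: bd_def)
  show "four_block_mat (bd 2 (\<lambda>_. b)) (0\<^sub>m 2 m) (0\<^sub>m m 2) (bd m s2) $$ (i,j) = bd (2+m) s $$ (i,j)"
  proof (cases "i < 2")
    case True
    then show ?thesis using i j s by (cases "j < 2") (auto simp: bd_def)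
  next
    case False
    show ?thesis
    proof (cases "j < 2")
      case True
      then have "j = 0 \<or> j = 1" by auto
      then show ?thesis using False i j s by (elim disjE) (auto simp: bd_def)
    next
      case False2: False
      obtain i' where i': "i = Suc (Suc i')" using False by (metis add_2_eq_Suc le_add_diff_inverse not_less)
      obtain j' where j': "j = Suc (Suc j')" using False2 by (metis add_2_eq_Suc le_add_diff_inverse not_less)
      have "i' div 2 \<noteq> Suc (i' div 2) - 1 \<Longrightarrow> False" by simp
      show ?thesis using i j s i' j' by (auto simp: bd_def)
    qed
  qed
qed (auto simp: bd_def)

theorem nf:
  "asym_mat N W \<Longrightarrow> nonsing_mat N W \<Longrightarrow> even N \<and> (\<exists>U s. U \<in> carrier_mat N N \<and> transpose_mat U * U = 1\<^sub>m N \<and>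
     (\<forall>k < N div 2. s k > 0) \<and> transpose_mat U * W * U = bd N s)"
proof (induction N arbitrary: W rule: less_induct)
  case (less N)
  have Wc: "W \<in> carrier_mat N N" using less.prems(1) unfolding asym_mat_def by blast
  consider "N = 0" | "N = 1" | "2 \<le> N" by linarith
  then show ?case
  proof cases
    case 1
    have "transpose_mat (1\<^sub>m N) * W * 1\<^sub>m N = bd N (\<lambda>_. 1)" using 1 Wc by (intro eq_matI) (auto simp: bd_def)
    then show ?thesis using 1 by (intro conjI exI[of _ "1\<^sub>m N"] exI[of _ "\<lambda>_. 1::real"]) auto
  next
    case 2
    have W00: "W $$ (0,0) = - W $$ (0,0)" using less.prems(1) 2 unfolding asym_mat_def by blast
    have "W *\<^sub>v unit_vec N 0 = 0\<^sub>v N"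
    proof (rule eq_vecI)
      fix i assume "i < dim_vec (0\<^sub>v N :: real vec)"
      then have i: "i = 0" using 2 by simp
      have "(W *\<^sub>v unit_vec N 0) $ i = (\<Sum>j<1. W $$ (0,j) * unit_vec N 0 $ j)"
        using Wc i 2 by (simp add: scalar_prod_def)
      also have "\<dots> = 0" using W00 2 by simp
      finally show "(W *\<^sub>v unit_vec N 0) $ i = 0\<^sub>v N $ i" using i 2 by simp
    qed (use Wc in auto)
    then have "unit_vec N 0 = (0\<^sub>v N :: real vec)" using less.prems(2) unfolding nonsing_mat_def by auto
    then show ?thesis using 2 by simp
  next
    case 3
    define m where "m = N - 2"
    have Nm: "N = 2 + m" using 3 unfolding m_def by simp
    obtain Q b W2 where Qc: "Q \<in> carrier_mat (2+m) (2+m)" and Qo: "transpose_mat Q * Q = 1\<^sub>m (2+m)"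
      and b: "b > 0" and as2: "asym_mat m W2" and ns2: "nonsing_mat m W2"
      and QW: "transpose_mat Q * W * Q = four_block_mat (bd 2 (\<lambda>_. b)) (0\<^sub>m 2 m) (0\<^sub>m m 2) W2"
      using nf_step[of m W] less.prems unfolding Nm by blast
    have "m < N" using Nm by simp
    from less.IH[OF this as2 ns2] obtain O2 s2 where ev: "even m" and O2c: "O2 \<in> carrier_mat m m"
      and O2o: "transpose_mat O2 * O2 = 1\<^sub>m m" and s2: "\<forall>k < m div 2. s2 k > 0"
      and O2W: "transpose_mat O2 * W2 * O2 = bd m s2" by blast
    have W2c: "W2 \<in> carrier_mat m m" using as2 unfolding asym_mat_def by blast
    define E where "E = four_block_mat (1\<^sub>m 2) (0\<^sub>m 2 m) (0\<^sub>m m 2) O2"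
    have Ec: "E \<in> carrier_mat (2+m) (2+m)" unfolding E_def using O2c by auto
    define s where "s = (\<lambda>k. if k = 0 then b else s2 (k - 1))"
    have Wc': "W \<in> carrier_mat (2+m) (2+m)" using Wc Nm by simp
    have "transpose_mat (Q * E) * 1\<^sub>m (2+m) * (Q * E) = transpose_mat E * (transpose_mat Q * 1\<^sub>m (2+m) * Q) * E"
      by (rule cong_mult[OF Qc Ec]) simp
    also have "transpose_mat Q * 1\<^sub>m (2+m) * Q = four_block_mat (1\<^sub>m 2) (0\<^sub>m 2 m) (0\<^sub>m m 2) (1\<^sub>m m)"
      using Qc Qo by simp
    also have "transpose_mat E * four_block_mat (1\<^sub>m 2) (0\<^sub>m 2 m) (0\<^sub>m m 2) (1\<^sub>m m) * E
       = four_block_mat (1\<^sub>m 2) (0\<^sub>m 2 m) (0\<^sub>m m 2) (transpose_mat O2 * 1\<^sub>m m * O2)"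
      unfolding E_def by (rule deflate[OF _ _ O2c]) auto
    also have "\<dots> = 1\<^sub>m (2+m)" using O2c O2o by simp
    finally have Oo: "transpose_mat (Q * E) * (Q * E) = 1\<^sub>m (2+m)" using Qc Ec by simp
    have "transpose_mat (Q * E) * W * (Q * E) = transpose_mat E * (transpose_mat Q * W * Q) * E"
      by (rule cong_mult[OF Qc Ec Wc'])
    also have "\<dots> = four_block_mat (bd 2 (\<lambda>_. b)) (0\<^sub>m 2 m) (0\<^sub>m m 2) (transpose_mat O2 * W2 * O2)"
      unfolding QW E_def by (rule deflate[OF _ W2c O2c]) (simp add: bd_def)
    also have "\<dots> = bd (2+m) s" unfolding O2W by (rule bd_split) (simp add: s_def)
    finally have OW: "transpose_mat (Q * E) * W * (Q * E) = bd (2+m) s" .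
    have spos: "\<forall>k < (2+m) div 2. s k > 0"
    proof (intro allI impI)
      fix k assume k: "k < (2+m) div 2"
      show "s k > 0"
      proof (cases "k = 0")
        case True then show ?thesis using b by (simp add: s_def)
      next
        case False
        then have "k - 1 < m div 2" using k by auto
        then show ?thesis using s2 False by (simp add: s_def)
      qed
    qed
    have QEc: "Q * E \<in> carrier_mat (2+m) (2+m)" using Qc Ec by simp
    have ev2: "even (2+m)" using ev by simp
    show ?thesis unfolding Nm
      apply (intro conjI)
       apply (rule ev2)
      apply (rule exI[of _ "Q * E"], rule exI[of _ s])
      using QEc Oo spos OW by blast
  qed
qed



lemma sum_L:
  fixes f :: "nat \<Rightarrow> real"
  assumes "i < N" "0 < N"
  shows "(\<Sum>a<N. ((if a = i then 1 else 0) + (if a = 0 then c else 0)) * f a) = f i + c * f 0"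
proof -
  have "(\<Sum>a<N. ((if a = i then 1 else 0) + (if a = 0 then c else 0)) * f a)
      = (\<Sum>a<N. (if a = i then f a else 0) + (if a = 0 then c * f a else 0))"
    by (rule sum.cong) (auto simp: algebra_simps)
  also have "\<dots> = f i + c * f 0" using assms by (simp add: sum.distrib sum.delta algebra_simps)
  finally show ?thesis .
qed

lemma sum_L':
  fixes f :: "nat \<Rightarrow> real"
  assumes "i < N" "0 < N"
  shows "(\<Sum>a<N. f a * ((if a = i then 1 else 0) + (if a = 0 then c else 0))) = f i + c * f 0"
  using sum_L[OF assms, of c f] by (simp add: mult.commute)

lemma sym_entry:
  assumes "transpose_mat B = B" "B \<in> carrier_mat N N" "a < N" "c < N"
  shows "B $$ (c,a) = B $$ (a,c)"
  using arg_cong[OF assms(1), of "\<lambda>M. M $$ (a,c)"] assms(2-4) by auto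

lemma chol_block:
  fixes B :: "real mat"
  assumes B: "pos_def (Suc m) B"
  defines "b \<equiv> B $$ (0,0)"
  defines "al \<equiv> (\<lambda>j. if j = 0 then 0 else - B $$ (0,j) / b)"
  defines "L \<equiv> mat (Suc m) (Suc m) (\<lambda>(i,j). (if i = j then 1 else 0) + (if i = 0 then al j else 0))"
  defines "B1 \<equiv> mat m m (\<lambda>(i,j). B $$ (Suc i, Suc j) - B $$ (0, Suc i) * B $$ (0, Suc j) / b)"
  shows "transpose_mat L * B * L = four_block_mat (mat 1 1 (\<lambda>_. b)) (0\<^sub>m 1 m) (0\<^sub>m m 1) B1"
proof -
  let ?N = "Suc m"
  have Bc: "B \<in> carrier_mat ?N ?N" and Bs: "transpose_mat B = B" using B unfolding pos_def_def by auto
  have bpos: "b > 0" unfolding b_def using pos_def_diag[OF B] by auto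
  have Lc: "L \<in> carrier_mat ?N ?N" unfolding L_def by auto
  have Lent: "\<And>a i. a < ?N \<Longrightarrow> i < ?N \<Longrightarrow> L $$ (a,i) = (if a = i then 1 else 0) + (if a = 0 then al i else 0)"
    unfolding L_def by auto
  have C: "\<And>i j. i < ?N \<Longrightarrow> j < ?N \<Longrightarrow> (transpose_mat L * B * L) $$ (i,j) =
      (B $$ (i,j) + al j * B $$ (i,0)) + al i * (B $$ (0,j) + al j * B $$ (0,0))"
  proof -
    fix i j assume i: "i < ?N" and j: "j < ?N"
    have "(transpose_mat L * B * L) $$ (i,j) = (\<Sum>a<?N. \<Sum>c<?N. L $$ (a,i) * B $$ (a,c) * L $$ (c,j))"
      by (rule triple_entry[OF Lc Bc Lc i j])
    also have "\<dots> = (\<Sum>a<?N. ((if a = i then 1 else 0) + (if a = 0 then al i else 0)) *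
        (\<Sum>c<?N. B $$ (a,c) * ((if c = j then 1 else 0) + (if c = 0 then al j else 0))))"
    proof -
      have "(\<Sum>a<?N. \<Sum>c<?N. L $$ (a,i) * B $$ (a,c) * L $$ (c,j)) = (\<Sum>a<?N. \<Sum>c<?N.
          ((if a = i then 1 else 0) + (if a = 0 then al i else 0)) * B $$ (a,c) * ((if c = j then 1 else 0) + (if c = 0 then al j else 0)))"
        using i j by (intro sum.cong refl) (simp add: Lent)
      then show ?thesis by (simp only: sum_distrib_left mult.assoc)
    qed
    also have "\<dots> = (\<Sum>a<?N. ((if a = i then 1 else 0) + (if a = 0 then al i else 0)) *
        (B $$ (a,j) + al j * B $$ (a,0)))"
    proof -
      have inner: "\<And>a. (\<Sum>c<?N. B $$ (a,c) * ((if c = j then 1 else 0) + (if c = 0 then al j else 0))) = B $$ (a,j) + al j * B $$ (a,0)"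
        using j by (intro sum_L') auto
      show ?thesis by (simp only: inner)
    qed
    also have "\<dots> = (B $$ (i,j) + al j * B $$ (i,0)) + al i * (B $$ (0,j) + al j * B $$ (0,0))"
      using i by (rule sum_L) simp
    finally show "(transpose_mat L * B * L) $$ (i,j) =
      (B $$ (i,j) + al j * B $$ (i,0)) + al i * (B $$ (0,j) + al j * B $$ (0,0))" .
  qed
  show ?thesis
  proof (rule eq_matI)
    fix i j assume "i < dim_row (four_block_mat (mat 1 1 (\<lambda>_. b)) (0\<^sub>m 1 m) (0\<^sub>m m 1) B1)"
      "j < dim_col (four_block_mat (mat 1 1 (\<lambda>_. b)) (0\<^sub>m 1 m) (0\<^sub>m m 1) B1)"
    then have i: "i < ?N" and j: "j < ?N" unfolding B1_def by auto
    have s1: "B $$ (i,0) = B $$ (0,i)" using sym_entry[OF Bs Bc _ i, of 0] by simp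
    show "(transpose_mat L * B * L) $$ (i,j) = four_block_mat (mat 1 1 (\<lambda>_. b)) (0\<^sub>m 1 m) (0\<^sub>m m 1) B1 $$ (i,j)"
    proof (cases "i = 0")
      case True
      then show ?thesis using j C[OF i j] bpos unfolding al_def b_def B1_def by (auto simp: field_simps)
    next
      case False
      then obtain i' where i': "i = Suc i'" by (cases i) auto
      show ?thesis
      proof (cases "j = 0")
        case True
        then show ?thesis using False i C[OF i j] bpos s1 unfolding al_def b_def B1_def by (auto simp: field_simps)
      next
        case False2: False
        then obtain j' where j': "j = Suc j'" by (cases j) auto
        have "(transpose_mat L * B * L) $$ (i,j) = B $$ (Suc i', Suc j') - B $$ (0, Suc i') * B $$ (0, Suc j') / b"
          using C[OF i j] bpos s1 False False2 i' j' unfolding al_def b_def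
          by (simp add: field_simps power2_eq_square)
        then show ?thesis using i j i' j' unfolding B1_def by simp
      qed
    qed
  qed (auto simp: B1_def L_def)
qed



theorem chol: "pos_def N B \<Longrightarrow> \<exists>S. S \<in> carrier_mat N N \<and> transpose_mat S * B * S = 1\<^sub>m N"
proof (induction N arbitrary: B)
  case 0
  then have "B \<in> carrier_mat 0 0" unfolding pos_def_def by auto
  then show ?case by (intro exI[of _ "1\<^sub>m 0"]) (auto intro!: eq_matI)
next
  case (Suc m)
  note B = Suc.prems
  let ?N = "Suc m"
  have Bc: "B \<in> carrier_mat ?N ?N" and Bs: "transpose_mat B = B" using B unfolding pos_def_def by auto
  define b where "b = B $$ (0,0)"
  define al where "al = (\<lambda>j. if j = 0 then 0 else - B $$ (0,j) / b)"
  define L where "L = mat ?N ?N (\<lambda>(i,j). (if i = j then 1 else 0) + (if i = 0 then al j else (0::real)))"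
  define B1 where "B1 = mat m m (\<lambda>(i,j). B $$ (Suc i, Suc j) - B $$ (0, Suc i) * B $$ (0, Suc j) / b)"
  have bpos: "b > 0" unfolding b_def using pos_def_diag[OF B] by auto
  have Lc: "L \<in> carrier_mat ?N ?N" unfolding L_def by auto
  have B1c: "B1 \<in> carrier_mat m m" unfolding B1_def by auto
  have LBL: "transpose_mat L * B * L = four_block_mat (mat 1 1 (\<lambda>_. b)) (0\<^sub>m 1 m) (0\<^sub>m m 1) B1"
    unfolding L_def B1_def al_def b_def by (rule chol_block[OF B])
  have Xc: "mat 1 1 (\<lambda>_. b) \<in> carrier_mat 1 1" by auto
  have B1pd: "pos_def m B1"
    unfolding pos_def_def
  proof (intro conjI ballI impI)
    show "B1 \<in> carrier_mat m m" by fact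
    show "transpose_mat B1 = B1"
    proof (rule eq_matI)
      fix i j assume "i < dim_row B1" "j < dim_col B1"
      then have i: "i < m" and j: "j < m" using B1c by auto
      have "B $$ (Suc j, Suc i) = B $$ (Suc i, Suc j)" using sym_entry[OF Bs Bc, of "Suc i" "Suc j"] i j by simp
      then show "transpose_mat B1 $$ (i,j) = B1 $$ (i,j)" using i j unfolding B1_def by simp
    qed (use B1c in auto)
    fix x :: "real vec" assume x: "x \<in> carrier_vec m" and x0: "x \<noteq> 0\<^sub>v m"
    define z where "z = 0\<^sub>v 1 @\<^sub>v x"
    have zc: "z \<in> carrier_vec ?N" unfolding z_def using append_carrier_vec[OF _ x, of "0\<^sub>v 1" 1] by simp
    have "four_block_mat (mat 1 1 (\<lambda>_. b)) (0\<^sub>m 1 m) (0\<^sub>m m 1) B1 *\<^sub>v z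
       = (mat 1 1 (\<lambda>_. b) *\<^sub>v 0\<^sub>v 1 + 0\<^sub>m 1 m *\<^sub>v x) @\<^sub>v (0\<^sub>m m 1 *\<^sub>v 0\<^sub>v 1 + B1 *\<^sub>v x)"
      unfolding z_def by (rule four_block_mat_mult_vec[OF Xc _ _ B1c]) (use x in auto)
    also have "\<dots> = 0\<^sub>v 1 @\<^sub>v (B1 *\<^sub>v x)"
    proof -
      have z1: "mat 1 1 (\<lambda>_. b) *\<^sub>v 0\<^sub>v 1 + 0\<^sub>m 1 m *\<^sub>v x = 0\<^sub>v 1" using x
        by (intro eq_vecI) (auto simp: scalar_prod_def)
      have z2: "0\<^sub>m m 1 *\<^sub>v 0\<^sub>v 1 + B1 *\<^sub>v x = B1 *\<^sub>v x" using x B1c by simp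
      show ?thesis unfolding z1 z2 ..
    qed
    finally have Cz: "(transpose_mat L * B * L) *\<^sub>v z = 0\<^sub>v 1 @\<^sub>v (B1 *\<^sub>v x)" unfolding LBL .
    have "z \<bullet> (0\<^sub>v 1 @\<^sub>v (B1 *\<^sub>v x)) = 0\<^sub>v 1 \<bullet> 0\<^sub>v 1 + x \<bullet> (B1 *\<^sub>v x)"
      unfolding z_def by (rule scalar_prod_append[of _ 1 _ m]) (use x B1c in auto)
    then have e1: "z \<bullet> ((transpose_mat L * B * L) *\<^sub>v z) = x \<bullet> (B1 *\<^sub>v x)" unfolding Cz by simp
    define w where "w = L *\<^sub>v z"
    have wc: "w \<in> carrier_vec ?N" unfolding w_def using Lc zc by simp
    have BLc: "B *\<^sub>v w \<in> carrier_vec ?N" using Bc wc by simp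
    have "(transpose_mat L * B * L) *\<^sub>v z = transpose_mat L *\<^sub>v (B *\<^sub>v w)"
      unfolding w_def using Lc Bc zc by (simp add: assoc_mult_mat_vec[of _ ?N ?N _ ?N])
    then have "z \<bullet> ((transpose_mat L * B * L) *\<^sub>v z) = (transpose_mat L *\<^sub>v (B *\<^sub>v w)) \<bullet> z"
      using comm_scalar_prod[OF zc, of "transpose_mat L *\<^sub>v (B *\<^sub>v w)"] Lc BLc by simp
    also have "\<dots> = (B *\<^sub>v w) \<bullet> w" using transpose_vec_mult_scalar[OF Lc zc BLc] by (simp add: w_def)
    also have "\<dots> = w \<bullet> (B *\<^sub>v w)" by (rule comm_scalar_prod[OF BLc wc])
    finally have e2: "x \<bullet> (B1 *\<^sub>v x) = w \<bullet> (B *\<^sub>v w)" using e1 by simp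
    have w0: "w \<noteq> 0\<^sub>v ?N"
    proof
      assume w0: "w = 0\<^sub>v ?N"
      have "x = 0\<^sub>v m"
      proof (rule eq_vecI)
        fix i assume "i < dim_vec (0\<^sub>v m :: real vec)"
        then have i: "i < m" by simp
        have "w $ Suc i = (\<Sum>j<?N. L $$ (Suc i, j) * z $ j)"
          unfolding w_def using Lc zc i by (simp add: scalar_prod_def atLeast0LessThan)
        also have "\<dots> = (\<Sum>j<?N. if j = Suc i then z $ j else 0)"
          using i by (intro sum.cong refl) (auto simp: L_def)
        also have "\<dots> = z $ Suc i" using i by (simp add: sum.delta)
        also have "\<dots> = x $ i" unfolding z_def using x i by simp
        finally show "x $ i = 0\<^sub>v m $ i" using w0 i by simp
      qed (use x in auto)
      with x0 show False by simp
    qed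
    have "w \<bullet> (B *\<^sub>v w) > 0" using B wc w0 unfolding pos_def_def by blast
    then show "x \<bullet> (B1 *\<^sub>v x) > 0" using e2 by simp
  qed
  from Suc.IH[OF B1pd] obtain S1 where S1c: "S1 \<in> carrier_mat m m" and S1e: "transpose_mat S1 * B1 * S1 = 1\<^sub>m m"
    by blast
  define cc where "cc = (\<lambda>j::nat. if j = 0 then 1 / sqrt b else 1)"
  define D where "D = mat ?N ?N (\<lambda>(i,j). if i = id j then cc j else 0)"
  have Dc: "D \<in> carrier_mat ?N ?N" unfolding D_def by auto
  have LBLc: "transpose_mat L * B * L \<in> carrier_mat ?N ?N" using Lc Bc by auto
  have "transpose_mat D * (transpose_mat L * B * L) * D = mat ?N ?N (\<lambda>(i,j). cc i * cc j * (transpose_mat L * B * L) $$ (id i, id j))"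
    unfolding D_def by (rule GT[OF LBLc]) auto
  also have "\<dots> = four_block_mat (1\<^sub>m 1) (0\<^sub>m 1 m) (0\<^sub>m m 1) B1"
  proof (rule eq_matI)
    fix i j assume "i < dim_row (four_block_mat (1\<^sub>m 1) (0\<^sub>m 1 m) (0\<^sub>m m 1) B1)"
      "j < dim_col (four_block_mat (1\<^sub>m 1) (0\<^sub>m 1 m) (0\<^sub>m m 1) B1)"
    then have i: "i < ?N" and j: "j < ?N" using B1c by auto
    have sb: "1 / sqrt b * (1 / sqrt b) * b = 1" using bpos by (simp add: field_simps)
    show "mat ?N ?N (\<lambda>(i,j). cc i * cc j * (transpose_mat L * B * L) $$ (id i, id j)) $$ (i,j) =
      four_block_mat (1\<^sub>m 1) (0\<^sub>m 1 m) (0\<^sub>m m 1) B1 $$ (i,j)"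
      using i j B1c sb unfolding LBL by (auto simp: cc_def)
  qed (use B1c in auto)
  finally have DC: "transpose_mat D * (transpose_mat L * B * L) * D = four_block_mat (1\<^sub>m 1) (0\<^sub>m 1 m) (0\<^sub>m m 1) B1" .
  define E where "E = four_block_mat (1\<^sub>m 1) (0\<^sub>m 1 m) (0\<^sub>m m 1) S1"
  have Ec: "E \<in> carrier_mat ?N ?N" unfolding E_def using S1c by auto
  have "transpose_mat (L * D * E) * B * (L * D * E) = transpose_mat E * (transpose_mat (L * D) * B * (L * D)) * E"
    by (rule cong_mult[OF _ Ec Bc]) (use Lc Dc in auto)
  also have "transpose_mat (L * D) * B * (L * D) = transpose_mat D * (transpose_mat L * B * L) * D"
    by (rule cong_mult[OF Lc Dc Bc])
  also note DC
  also have "transpose_mat E * four_block_mat (1\<^sub>m 1) (0\<^sub>m 1 m) (0\<^sub>m m 1) B1 * E =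
     four_block_mat (1\<^sub>m 1) (0\<^sub>m 1 m) (0\<^sub>m m 1) (transpose_mat S1 * B1 * S1)"
    unfolding E_def by (rule deflate[OF _ B1c S1c]) auto
  also have "\<dots> = 1\<^sub>m ?N" unfolding S1e by simp
  finally have "transpose_mat (L * D * E) * B * (L * D * E) = 1\<^sub>m ?N" .
  moreover have "L * D * E \<in> carrier_mat ?N ?N" using Lc Dc Ec by auto
  ultimately show ?case by blast
qed



lemma J_asym: "asym_mat (2*n) (Jmat n)"
  unfolding asym_mat_def by (auto simp: Jmat_entry)

lemma J_nonsing: "nonsing_mat (2*n) (Jmat n)"
  unfolding nonsing_mat_def
proof (intro ballI impI)
  fix v :: "real vec" assume v: "v \<in> carrier_vec (2*n)" and Jv: "Jmat n *\<^sub>v v = 0\<^sub>v (2*n)"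
  have "v = (transpose_mat (Jmat n) * Jmat n) *\<^sub>v v" unfolding JTJ using v by simp
  also have "\<dots> = transpose_mat (Jmat n) *\<^sub>v (Jmat n *\<^sub>v v)" by (rule assoc_mult_mat_vec[of _ "2*n" "2*n" _ "2*n"]) (use v in auto)
  also have "\<dots> = 0\<^sub>v (2*n)" unfolding Jv by (rule mat_mult_zero_vec) simp
  finally show "v = 0\<^sub>v (2*n)" .
qed

lemma cong3:
  fixes S U T X :: "real mat"
  assumes "S \<in> carrier_mat N N" "U \<in> carrier_mat N N" "T \<in> carrier_mat N N" "X \<in> carrier_mat N N"
  shows "transpose_mat (S * U * T) * X * (S * U * T) = transpose_mat T * (transpose_mat U * (transpose_mat S * X * S) * U) * T"
proof -
  have "transpose_mat (S * U * T) * X * (S * U * T) = transpose_mat T * (transpose_mat (S * U) * X * (S * U)) * T"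
    by (rule cong_mult) (use assms in auto)
  also have "transpose_mat (S * U) * X * (S * U) = transpose_mat U * (transpose_mat S * X * S) * U"
    by (rule cong_mult) (use assms in auto)
  finally show ?thesis .
qed

lemma parity_facts:
  fixes a b :: nat
  shows "Suc (2*a) \<noteq> 2*b" "(Suc (2*a) = Suc (2*b)) = (a = b)" "(2*a = 2*b) = (a = b)"
    "(2 * a + 1 = Suc (2 * b)) = (a = b)" "Suc (2*a+1) \<noteq> 2*b+1" "2*b \<noteq> Suc (2*a)"
    "2*b+1 \<noteq> Suc (2*a+1)" "Suc (Suc (2*a)) \<noteq> 2*b+1" "2*b+1 \<noteq> Suc (Suc (2*a))"
  by presburger+

theorem williamson':
  assumes B: "pos_def (2*n) B"
  shows "\<exists>ds. length ds = n \<and> sorted ds \<and> (\<forall>i<n. ds ! i > 0) \<and>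
      (\<exists>M. symplectic n M \<and> transpose_mat M * B * M = dsum (diagm ds) (diagm ds))"
proof -
  let ?N = "2*n"
  have Bc: "B \<in> carrier_mat ?N ?N" using B unfolding pos_def_def by auto
  obtain S where Sc: "S \<in> carrier_mat ?N ?N" and SBS: "transpose_mat S * B * S = 1\<^sub>m ?N"
    using chol[OF B] by blast
  have RS: "(transpose_mat S * B) * S = 1\<^sub>m ?N" using SBS .
  have Rc: "transpose_mat S * B \<in> carrier_mat ?N ?N" using Sc Bc by auto
  define K where "K = transpose_mat S * Jmat n * S"
  have asK: "asym_mat ?N K" unfolding K_def by (rule cong_asym[OF J_asym Sc])
  have nsK: "nonsing_mat ?N K" unfolding K_def by (rule cong_nonsing[OF J_nonsing _ Sc Rc RS]) simp
  obtain U s where Uc: "U \<in> carrier_mat ?N ?N" and Uo: "transpose_mat U * U = 1\<^sub>m ?N"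
    and spos: "\<forall>k < ?N div 2. s k > 0" and UKU: "transpose_mat U * K * U = bd ?N s"
    using nf[OF asK nsK] by blast
  define L0 where "L0 = map (\<lambda>k. 1 / s k) [0..<n]"
  obtain p where p: "p permutes {..<length L0}" and pl: "permute_list p L0 = sort L0"
    using mset_eq_permutation[of "sort L0" L0] by auto
  have p': "p permutes {..<n}" using p by (simp add: L0_def)
  have pl': "\<And>c. c < n \<Longrightarrow> p c < n" using permutes_in_image[OF p'] by auto
  have pi: "\<And>a b. p a = p b \<longleftrightarrow> a = b" using permutes_inj[OF p'] by (auto dest: injD)
  define ds where "ds = sort L0"
  have lends: "length ds = n" by (simp add: ds_def L0_def)
  have dsi: "\<And>i. i < n \<Longrightarrow> ds ! i = 1 / s (p i)"
  proof -
    fix i assume i: "i < n"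
    have "ds ! i = permute_list p L0 ! i" unfolding ds_def pl ..
    also have "\<dots> = L0 ! p i" using i p by (intro permute_list_nth) (auto simp: L0_def)
    also have "\<dots> = 1 / s (p i)" using pl'[OF i] by (simp add: L0_def)
    finally show "ds ! i = 1 / s (p i)" .
  qed
  have sp: "\<And>i. i < n \<Longrightarrow> s (p i) > 0" using spos pl' by auto
  define pj where "pj = (\<lambda>j. if j < n then p j else p (j - n))"
  define qq where "qq = (\<lambda>j. if j < n then 2 * p j else 2 * p (j - n) + 1)"
  define cc where "cc = (\<lambda>j. 1 / sqrt (s (pj j)))"
  define T where "T = mat ?N ?N (\<lambda>(i,j). if i = qq j then cc j else 0)"
  have qql: "\<And>j. j < ?N \<Longrightarrow> qq j < ?N"
  proof -
    fix j assume j: "j < ?N"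
    show "qq j < ?N"
    proof (cases "j < n")
      case True then show ?thesis using pl'[of j] unfolding qq_def by auto
    next
      case False
      then have "j - n < n" using j by arith
      then have "p (j - n) < n" by (rule pl')
      then show ?thesis using False unfolding qq_def by auto
    qed
  qed
  have Tc: "T \<in> carrier_mat ?N ?N" unfolding T_def by auto
  have ccsq: "\<And>j. j < ?N \<Longrightarrow> cc j * cc j = 1 / s (pj j)"
  proof -
    fix j assume j: "j < ?N"
    have "s (pj j) > 0" using sp[of j] sp[of "j-n"] j unfolding pj_def by auto
    then show "cc j * cc j = 1 / s (pj j)" unfolding cc_def by (simp add: field_simps)
  qed
  have bdc: "bd ?N s \<in> carrier_mat ?N ?N" by (simp add: bd_def)
  have Jeq: "transpose_mat T * bd ?N s * T = Jmat n"
  proof -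
    have "transpose_mat T * bd ?N s * T = mat ?N ?N (\<lambda>(i,j). cc i * cc j * bd ?N s $$ (qq i, qq j))"
      unfolding T_def by (rule GT[OF bdc qql])
    also have "\<dots> = Jmat n"
    proof (rule eq_matI)
      fix i j assume "i < dim_row (Jmat n)" "j < dim_col (Jmat n)"
      then have i: "i < ?N" and j: "j < ?N" by auto
      have qi: "qq i < ?N" and qj: "qq j < ?N" using qql i j by auto
      have val: "cc i * cc j * bd ?N s $$ (qq i, qq j) = Jmat n $$ (i,j)"
      proof (cases "i < n"; cases "j < n")
        assume a: "i < n" "j < n"
        then show ?thesis using qi qj by (simp add: bd_def qq_def Jmat_entry i j parity_facts)
      next
        assume a: "i < n" "\<not> j < n"
        show ?thesis
        proof (cases "j = i + n")
          case True
          have "cc i * cc j = 1 / s (p i)" using ccsq[OF i] True a unfolding cc_def pj_def by simp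
          then show ?thesis using qi qj a True sp[OF a(1)] by (simp add: bd_def qq_def Jmat_entry i j parity_facts)
        next
          case False
          then have "p (j - n) \<noteq> p i" using a pi by auto
          then show ?thesis using qi qj a False by (simp add: bd_def qq_def Jmat_entry i j parity_facts)
        qed
      next
        assume a: "\<not> i < n" "j < n"
        show ?thesis
        proof (cases "i = j + n")
          case True
          have "cc i * cc j = 1 / s (p j)" using ccsq[OF j] True a unfolding cc_def pj_def by simp
          then show ?thesis using qi qj a True sp[OF a(2)] by (simp add: bd_def qq_def Jmat_entry i j parity_facts)
        next
          case False
          then have "p (i - n) \<noteq> p j" using a pi by auto
          then show ?thesis using qi qj a False by (simp add: bd_def qq_def Jmat_entry i j parity_facts)
        qed
      next
        assume a: "\<not> i < n" "\<not> j < n"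
        then show ?thesis using qi qj i j by (simp add: bd_def qq_def Jmat_entry parity_facts; linarith)
      qed
      then show "mat ?N ?N (\<lambda>(i,j). cc i * cc j * bd ?N s $$ (qq i, qq j)) $$ (i,j) = Jmat n $$ (i,j)"
        using i j by simp
    qed auto
    finally show ?thesis .
  qed
  have Deq: "transpose_mat T * 1\<^sub>m ?N * T = dsum (diagm ds) (diagm ds)"
  proof -
    have "transpose_mat T * 1\<^sub>m ?N * T = mat ?N ?N (\<lambda>(i,j). cc i * cc j * (1\<^sub>m ?N :: real mat) $$ (qq i, qq j))"
      unfolding T_def by (rule GT[OF _ qql]) auto
    also have "\<dots> = dsum (diagm ds) (diagm ds)"
    proof (rule eq_matI)
      fix i j assume "i < dim_row (dsum (diagm ds) (diagm ds))" "j < dim_col (dsum (diagm ds) (diagm ds))"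
      then have i: "i < ?N" and j: "j < ?N" using dsum_carrier[of ds] lends by auto
      have qi: "qq i < ?N" and qj: "qq j < ?N" using qql i j by auto
      have qqinj: "qq i = qq j \<longleftrightarrow> i = j"
        using i j pi unfolding qq_def by (auto simp: parity_facts)
      have n0: "n > 0" using i by auto
      have im: "i mod n < n" using n0 by simp
      have pjm: "pj i = p (i mod n)" using i unfolding pj_def by (auto simp: le_mod_geq)
      have "cc i * cc j * (1\<^sub>m ?N :: real mat) $$ (qq i, qq j) = (if i = j then ds ! (i mod n) else 0)"
        using qi qj qqinj ccsq[OF i] dsi[OF im] pjm by auto
      then show "mat ?N ?N (\<lambda>(i,j). cc i * cc j * (1\<^sub>m ?N :: real mat) $$ (qq i, qq j)) $$ (i,j) = dsum (diagm ds) (diagm ds) $$ (i,j)"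
        using i j by (simp add: dsum_entry[OF lends i j])
    qed (use dsum_carrier[of ds] lends in auto)
    finally show ?thesis .
  qed
  define M where "M = S * U * T"
  have Mc: "M \<in> carrier_mat ?N ?N" unfolding M_def using Sc Uc Tc by auto
  have "transpose_mat M * Jmat n * M = transpose_mat T * (transpose_mat U * K * U) * T"
    unfolding M_def K_def by (rule cong3[OF Sc Uc Tc]) simp
  then have MJ: "transpose_mat M * Jmat n * M = Jmat n" unfolding UKU Jeq .
  have "transpose_mat M * B * M = transpose_mat T * (transpose_mat U * (transpose_mat S * B * S) * U) * T"
    unfolding M_def by (rule cong3[OF Sc Uc Tc Bc])
  also have "transpose_mat U * (transpose_mat S * B * S) * U = 1\<^sub>m ?N" unfolding SBS using Uc Uo by simp
  finally have MB: "transpose_mat M * B * M = dsum (diagm ds) (diagm ds)" unfolding Deq .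
  have sorted: "sorted ds" unfolding ds_def by simp
  have dpos: "\<forall>i<n. ds ! i > 0" using dsi sp by simp
  have "symplectic n M" unfolding symplectic_def using Mc MJ by simp
  then show ?thesis using lends sorted dpos MB by blast
qed


lemma part1:
  assumes A: "pos_def (2*n) A" and comm: "A * Jmat n = Jmat n * A"
    and B: "pos_def (2*n) B" and eig: "sympl_eigs n B = sort (Delta \<xi> n A)"
  shows "in_conv_sympl_orbit n A B"
proof -
  let ?L = "sort (Delta \<xi> n A)"
  let ?P = "\<lambda>ds. length ds = n \<and> sorted ds \<and> (\<forall>i<n. ds ! i > 0) \<and>
      (\<exists>M. symplectic n M \<and> transpose_mat M * B * M = dsum (diagm ds) (diagm ds))"
  have "?P (sympl_eigs n B)" unfolding sympl_eigs_def by (rule someI_ex, rule williamson'[OF B])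
  then obtain M where M: "symplectic n M" and MB: "transpose_mat M * B * M = dsum (diagm ?L) (diagm ?L)"
    unfolding eig by blast
  obtain N where N: "symplectic n N" and MN: "M * N = 1\<^sub>m (2*n)" using sympl_inverse[OF M] by blast
  have Ac: "A \<in> carrier_mat (2*n) (2*n)" using A unfolding pos_def_def by auto
  have Bc: "B \<in> carrier_mat (2*n) (2*n)" using B unfolding pos_def_def by auto
  have Mc: "M \<in> carrier_mat (2*n) (2*n)" and Nc: "N \<in> carrier_mat (2*n) (2*n)"
    using M N unfolding symplectic_def by auto
  have len: "length (Delta \<xi> n A) = n" by (simp add: Delta_def)
  obtain p where p: "p permutes {..<length (Delta \<xi> n A)}" and pl: "permute_list p (Delta \<xi> n A) = ?L"
    using mset_eq_permutation[of ?L "Delta \<xi> n A"] by auto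
  define P where "P = mat (2*n) (2*n) (\<lambda>(r,c). if r = (if c < n then p c else n + p (c - n)) then 1 else (0::real))"
  note pd = perm_dsum[OF p[unfolded len] len, folded P_def, unfolded pl]
  have Pc: "P \<in> carrier_mat (2*n) (2*n)" unfolding P_def by auto
  have "B = transpose_mat (M * N) * B * (M * N)" unfolding MN using Bc by simp
  also have "\<dots> = transpose_mat N * dsum (diagm ?L) (diagm ?L) * N"
    unfolding cong_mult[OF Mc Nc Bc] MB ..
  also have "\<dots> = transpose_mat N * (transpose_mat P * dsum (diagm (Delta \<xi> n A)) (diagm (Delta \<xi> n A)) * P) * N"
    unfolding pd(2) ..
  also have "\<dots> = transpose_mat (P * N) * dsum (diagm (Delta \<xi> n A)) (diagm (Delta \<xi> n A)) * (P * N)"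
    by (rule cong_mult[symmetric, OF Pc Nc]) (use dsum_carrier[of "Delta \<xi> n A"] len in auto)
  finally have Beq: "B = transpose_mat (P * N) * dsum (diagm (Delta \<xi> n A)) (diagm (Delta \<xi> n A)) * (P * N)" .
  show ?thesis unfolding Beq
    by (rule conv_transport[OF part2[OF A comm] sympl_mult[OF pd(1) N] Ac])
qed

theorem corollary3p5:
  fixes n :: nat and A :: "real mat" and \<xi> :: mean_kind
  assumes "pos_def (2*n) A"
    and "A * Jmat n = Jmat n * A"
  shows "(\<forall>B. pos_def (2*n) B \<and> sympl_eigs n B = sort (Delta \<xi> n A) \<longrightarrow> in_conv_sympl_orbit n A B)
       \<and> in_conv_sympl_orbit n A (dsum (diagm (Delta \<xi> n A)) (diagm (Delta \<xi> n A)))"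
  using part1[OF assms] part2[OF assms] by blast


end
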